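(* Let $\Theta$ be an $N$-tuple of pairwise commuting symmetric positive definite $n\times n$ matrices. If $Y$ is $\Theta$-self-similar, then $\mathcal{M}_\Theta Y\in\mathcal{G}_{\Theta,0}$. If $G\in\mathcal{G}_\Theta$, then $\mathcal{M}^{-1}_\Theta G$ is $\Theta$-self-similar. Moreover $(\mathcal{M}^{-1}_\Theta\circ\mathcal{M}_\Theta)(Y)=Y$ for every $\Theta$-self-similar $Y$ and $(\mathcal{M}_\Theta\circ\mathcal{M}^{-1}_\Theta)(G)=G$ for every $G\in\mathcal{G}_{\Theta,0}$.
   Context: For $t\in\mathbb{Z}^N$ and an $N$-tuple $\Theta$ of $n\times n$ matrices, $t\ast\Theta=\sum_{j=1}^N t_j\Theta_j$. For a field $Z=(Z_t)_{t\in\mathbb{Z}^N}$, $\Delta_t Z=\sum_{i\in\{0,1\}^N}(-1)^{i_1+\dots+i_N}Z_{t_1-i_1,\dots,t_N-i_N}$; for a field $Y=(Y_{e^t})_{t\in\mathbb{Z}^N}$, $\Delta_tY=\sum_{i\in\{0,1\}^N}(-1)^{i_1+\dots+i_N}Y_{e^{t-i}}$. Equality in law of fields means equality of all finite-dimensional distributions. $Y$ is $\Theta$-self-similar if $(Y_{e^{t+s}})_{t}$ and $(e^{s\ast\Theta}Y_{e^t})_{t}$ are equal in law for every $s\in\mathbb{Z}^N$. $G$ is a stationary increment field if $(\Delta_{t+s}G)_{t}$ and $(\Delta_tG)_{t}$ are equal in law for every $s$. $\mathcal{G}_\Theta$ is the class of stationary increment fields $G$ such that $\sum_{j=-\infty}^te^{j\ast\Theta}\Delta_jG:=\lim_{M_1\to\infty}\cdots\lim_{M_N\to\infty}\sum_{j_1=-M_1}^{t_1}\cdots\sum_{j_N=-M_N}^{t_N}e^{j\ast\Theta}\Delta_jG$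 converges in probability for every $t\in\mathbb{Z}^N$; $\mathcal{G}_{\Theta,0}$ is the subclass with $G_t=0$ a.s. whenever $t_l=0$ for some $l$. The transformations are: $(\mathcal{M}^{-1}_\Theta G)_{e^t}=\sum_{j=-\infty}^te^{j\ast\Theta}\Delta_jG$, and $(\mathcal{M}_\Theta Y)_t=(-1)^{|\{l:t_l<0\}|}\sum_j e^{-j\ast\Theta}\Delta_jY$, where the sum runs over $j\in\mathbb{Z}^N$ with $1\le j_l\le t_l$ if $t_l\ge0$ and $t_l+1\le j_l\le0$ if $t_l<0$ (empty ranges give empty sums). *)

theory Defs
  imports "HOL-Analysis.Analysis" "HOL-Probability.Probability"
begin

primrec matpow :: "real^'n^'n \<Rightarrow> nat \<Rightarrow> real^'n^'n" where
  "matpow A 0 = mat 1"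
| "matpow A (Suc k) = A ** matpow A k"

definition mat_exp :: "real^'n^'n \<Rightarrow> real^'n^'n" where
  "mat_exp A = (\<Sum>k. (1 / fact k) *\<^sub>R matpow A k)"

definition pos_def_mat :: "real^'n^'n \<Rightarrow> bool" where
  "pos_def_mat A \<longleftrightarrow> (\<forall>x. x \<noteq> 0 \<longrightarrow> 0 < x \<bullet> (A *v x))"

definition tstar :: "(int, 'N::finite) vec \<Rightarrow> ('N \<Rightarrow> real^'n^'n) \<Rightarrow> real^'n^'n" where
  "tstar t \<Theta> = (\<Sum>l\<in>UNIV. of_int (t $ l) *\<^sub>R \<Theta> l)"

text \<open>A field is a family of R^n-valued random vectors indexed by (int, 'N) vec.
  A field (Y_{e^t})_t is represented by the function t \<mapsto> Y_{e^t}.\<close>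

definition random_field :: "'w measure \<Rightarrow> ((int, 'N) vec \<Rightarrow> 'w \<Rightarrow> real^'n) \<Rightarrow> bool" where
  "random_field M X \<longleftrightarrow> (\<forall>t. X t \<in> borel_measurable M)"

definition eq_law :: "'w measure \<Rightarrow> ('i \<Rightarrow> 'w \<Rightarrow> 'b::topological_space)
    \<Rightarrow> ('i \<Rightarrow> 'w \<Rightarrow> 'b) \<Rightarrow> bool" where
  "eq_law M X X' \<longleftrightarrow> (\<forall>T. finite T \<longrightarrow>
      distr M (PiM T (\<lambda>_. borel)) (\<lambda>\<omega>. restrict (\<lambda>t. X t \<omega>) T)
    = distr M (PiM T (\<lambda>_. borel)) (\<lambda>\<omega>. restrict (\<lambda>t. X' t \<omega>) T))"

definition ind_vec :: "'N::finite set \<Rightarrow> (int, 'N) vec" where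
  "ind_vec S = (\<chi> l. if l \<in> S then 1 else 0)"

definition delta :: "((int, 'N::finite) vec \<Rightarrow> 'w \<Rightarrow> real^'n) \<Rightarrow> (int, 'N) vec \<Rightarrow> 'w \<Rightarrow> real^'n" where
  "delta Z t \<omega> = (\<Sum>S\<in>Pow (UNIV::'N set). (-1) ^ card S *\<^sub>R Z (t - ind_vec S) \<omega>)"

definition self_similar :: "'w measure \<Rightarrow> ('N::finite \<Rightarrow> real^'n^'n)
    \<Rightarrow> ((int, 'N) vec \<Rightarrow> 'w \<Rightarrow> real^'n) \<Rightarrow> bool" where
  "self_similar M \<Theta> Y \<longleftrightarrow> random_field M Y \<and>
     (\<forall>s. eq_law M (\<lambda>t. Y (t + s)) (\<lambda>t \<omega>. mat_exp (tstar s \<Theta>) *v Y t \<omega>))"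

definition stationary_increments :: "'w measure \<Rightarrow> ((int, 'N::finite) vec \<Rightarrow> 'w \<Rightarrow> real^'n) \<Rightarrow> bool" where
  "stationary_increments M G \<longleftrightarrow> random_field M G \<and>
     (\<forall>s. eq_law M (\<lambda>t. delta G (t + s)) (\<lambda>t. delta G t))"

definition conv_prob :: "'w measure \<Rightarrow> (nat \<Rightarrow> 'w \<Rightarrow> real^'n) \<Rightarrow> ('w \<Rightarrow> real^'n) \<Rightarrow> bool" where
  "conv_prob M Xs X \<longleftrightarrow> X \<in> borel_measurable M \<and> (\<forall>m. Xs m \<in> borel_measurable M) \<and>
     (\<forall>e>0. (\<lambda>m. measure M {\<omega>\<in>space M. e < dist (Xs m \<omega>) (X \<omega>)}) \<longlonglongrightarrow> 0)"

definition vupd :: "(int, 'N::finite) vec \<Rightarrow> 'N \<Rightarrow> int \<Rightarrow> (int, 'N) vec" where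
  "vupd a l c = (\<chi> k. if k = l then c else a $ k)"

text \<open>iter_lim M [l1,...,lk] F a X: X is the iterated limit in probability
  lim_{M_{l1}\<rightarrow>\<infinity>} ... lim_{M_{lk}\<rightarrow>\<infinity>} F(a'), where a' is a with coordinate l_i
  replaced by -M_{l_i}; the outermost limit corresponds to the first list element.\<close>
fun iter_lim :: "'w measure \<Rightarrow> ('N::finite) list \<Rightarrow> ((int, 'N) vec \<Rightarrow> 'w \<Rightarrow> real^'n) \<Rightarrow> (int, 'N) vec
    \<Rightarrow> ('w \<Rightarrow> real^'n) \<Rightarrow> bool" where
  "iter_lim M [] F a X \<longleftrightarrow> X = F a"
| "iter_lim M (l # ls) F a X \<longleftrightarrow>
     (\<exists>Xs. (\<forall>m. iter_lim M ls F (vupd a l (- int m)) (Xs m)) \<and> conv_prob M Xs X)"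

definition box_sum :: "('N::finite \<Rightarrow> real^'n^'n) \<Rightarrow> ((int, 'N) vec \<Rightarrow> 'w \<Rightarrow> real^'n)
    \<Rightarrow> (int, 'N) vec \<Rightarrow> (int, 'N) vec \<Rightarrow> 'w \<Rightarrow> real^'n" where
  "box_sum \<Theta> G t a \<omega> = (\<Sum>j\<in>{j. \<forall>l. a $ l \<le> j $ l \<and> j $ l \<le> t $ l}.
      mat_exp (tstar j \<Theta>) *v delta G j \<omega>)"

definition coords :: "'N::{finite,linorder} list" where
  "coords = sorted_list_of_set UNIV"

text \<open>The iterated series sum_{j=-\<infinity>}^t e^{j*Theta} Delta_j G converges in probability to X.\<close>
definition series_lim :: "'w measure \<Rightarrow> ('N::{finite,linorder} \<Rightarrow> real^'n^'n)
    \<Rightarrow> ((int, 'N) vec \<Rightarrow> 'w \<Rightarrow> real^'n) \<Rightarrow> (int, 'N) vec \<Rightarrow> ('w \<Rightarrow> real^'n) \<Rightarrow> bool" where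
  "series_lim M \<Theta> G t X \<longleftrightarrow> iter_lim M (coords :: 'N list) (box_sum \<Theta> G t) 0 X"

definition G_class :: "'w measure \<Rightarrow> ('N::{finite,linorder} \<Rightarrow> real^'n^'n)
    \<Rightarrow> ((int, 'N) vec \<Rightarrow> 'w \<Rightarrow> real^'n) \<Rightarrow> bool" where
  "G_class M \<Theta> G \<longleftrightarrow> stationary_increments M G \<and> (\<forall>t. \<exists>X. series_lim M \<Theta> G t X)"

definition G_class0 :: "'w measure \<Rightarrow> ('N::{finite,linorder} \<Rightarrow> real^'n^'n)
    \<Rightarrow> ((int, 'N) vec \<Rightarrow> 'w \<Rightarrow> real^'n) \<Rightarrow> bool" where
  "G_class0 M \<Theta> G \<longleftrightarrow> G_class M \<Theta> G \<and>
     (\<forall>t. (\<exists>l. t $ l = 0) \<longrightarrow> (AE \<omega> in M. G t \<omega> = 0))"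

text \<open>(M^{-1}_Theta G)_{e^t}: the (a.s. unique) limit in probability.\<close>
definition Minv :: "'w measure \<Rightarrow> ('N::{finite,linorder} \<Rightarrow> real^'n^'n)
    \<Rightarrow> ((int, 'N) vec \<Rightarrow> 'w \<Rightarrow> real^'n) \<Rightarrow> (int, 'N) vec \<Rightarrow> 'w \<Rightarrow> real^'n" where
  "Minv M \<Theta> G t = (SOME X. series_lim M \<Theta> G t X)"

definition M_range :: "(int, 'N::finite) vec \<Rightarrow> ((int, 'N) vec) set" where
  "M_range t = {j. \<forall>l. (0 \<le> t $ l \<longrightarrow> 1 \<le> j $ l \<and> j $ l \<le> t $ l) \<and>
                        (t $ l < 0 \<longrightarrow> t $ l + 1 \<le> j $ l \<and> j $ l \<le> 0)}"

definition M_op :: "('N::finite \<Rightarrow> real^'n^'n) \<Rightarrow> ((int, 'N) vec \<Rightarrow> 'w \<Rightarrow> real^'n)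
    \<Rightarrow> (int, 'N) vec \<Rightarrow> 'w \<Rightarrow> real^'n" where
  "M_op \<Theta> Y t \<omega> = (-1) ^ card {l. t $ l < 0} *\<^sub>R
     (\<Sum>j\<in>M_range t. mat_exp (- tstar j \<Theta>) *v delta Y j \<omega>)"

end

theory Submission
  imports Defs
begin


typedef (overloaded) ('n::finite) mx = "UNIV :: (real^'n^'n) set"
  morphisms mrep Mx by auto

setup_lifting type_definition_mx

instantiation mx :: (finite) real_normed_vector
begin
lift_definition norm_mx :: "'a mx \<Rightarrow> real" is "\<lambda>A. onorm ((*v) A)" .
lift_definition minus_mx :: "'a mx \<Rightarrow> 'a mx \<Rightarrow> 'a mx" is "(-)" .
lift_definition plus_mx :: "'a mx \<Rightarrow> 'a mx \<Rightarrow> 'a mx" is "(+)" .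
lift_definition uminus_mx :: "'a mx \<Rightarrow> 'a mx" is "uminus" .
lift_definition zero_mx :: "'a mx" is "0" .
lift_definition scaleR_mx :: "real \<Rightarrow> 'a mx \<Rightarrow> 'a mx" is "scaleR" .
definition dist_mx :: "'a mx \<Rightarrow> 'a mx \<Rightarrow> real" where "dist_mx a b = norm (a - b)"
definition [code del]:
  "(uniformity :: ('a mx \<times> 'a mx) filter) = (INF e\<in>{0 <..}. principal {(x, y). dist x y < e})"
definition open_mx :: "'a mx set \<Rightarrow> bool"
  where [code del]: "open_mx S = (\<forall>x\<in>S. \<forall>\<^sub>F (x', y) in uniformity. x' = x \<longrightarrow> y \<in> S)"
definition sgn_mx :: "'a mx \<Rightarrow> 'a mx" where "sgn_mx x = scaleR (inverse (norm x)) x"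
instance
proof
  fix a b c :: "'a mx" and r s :: real
  show "a + b + c = a + (b + c)" by transfer (simp add: algebra_simps)
  show "a + b = b + a" by transfer (simp add: algebra_simps)
  show "0 + a = a" by transfer simp
  show "- a + a = 0" by transfer simp
  show "a - b = a + - b" by transfer simp
  show "r *\<^sub>R (a + b) = r *\<^sub>R a + r *\<^sub>R b" by transfer (simp add: algebra_simps)
  show "(r + s) *\<^sub>R a = r *\<^sub>R a + s *\<^sub>R a" by transfer (simp add: algebra_simps)
  show "r *\<^sub>R s *\<^sub>R a = (r * s) *\<^sub>R a" by transfer simp
  show "1 *\<^sub>R a = a" by transfer simp
  show "dist a b = norm (a - b)" by (simp add: dist_mx_def)
  show "sgn a = inverse (norm a) *\<^sub>R a" by (simp add: sgn_mx_def)
  show "(norm a = 0) = (a = 0)"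
    by transfer (auto simp: onorm_eq_0 onorm_zero, metis matrix_eq matrix_vector_mult_0)
  show "norm (a + b) \<le> norm a + norm b"
  proof transfer
    fix a b :: "real^'a^'a"
    have "(*v) (a + b) = (\<lambda>x. a *v x + b *v x)" by (auto simp: matrix_vector_mult_add_rdistrib)
    then show "onorm ((*v) (a + b)) \<le> onorm ((*v) a) + onorm ((*v) b)"
      by (simp add: onorm_triangle)
  qed
  show "norm (r *\<^sub>R a) = \<bar>r\<bar> * norm a"
  proof transfer
    fix r and a :: "real^'a^'a"
    have "(*v) (r *\<^sub>R a) = (\<lambda>x. r *\<^sub>R (a *v x))" by (auto simp: scaleR_matrix_vector_assoc)
    then show "onorm ((*v) (r *\<^sub>R a)) = \<bar>r\<bar> * onorm ((*v) a)"
      by (simp add: onorm_scaleR)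
  qed
qed (simp_all add: uniformity_mx_def open_mx_def)
end


instantiation mx :: (finite) real_normed_algebra_1
begin
lift_definition times_mx :: "'a mx \<Rightarrow> 'a mx \<Rightarrow> 'a mx" is "(**)" .
lift_definition one_mx :: "'a mx" is "mat 1" .
instance
proof
  fix a b c :: "'a mx" and r :: real
  show "a * b * c = a * (b * c)" by transfer (simp add: matrix_mul_assoc)
  show "1 * a = a" by transfer simp
  show "a * 1 = a" by transfer simp
  show "(a + b) * c = a * c + b * c" by transfer (vector matrix_matrix_mult_def sum.distrib distrib_right)
  show "a * (b + c) = a * b + a * c" by transfer (simp add: matrix_add_ldistrib)
  show "(0::'a mx) \<noteq> 1"
  proof transfer
    obtain i :: 'a where True by auto
    have "(mat 1 :: real^'a^'a) $ i $ i = 1" by (simp add: mat_def)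
    then show "(0::real^'a^'a) \<noteq> mat 1" by auto
  qed
  show "r *\<^sub>R a * b = r *\<^sub>R (a * b)" by transfer (simp add: scalar_matrix_assoc)
  show "a * r *\<^sub>R b = r *\<^sub>R (a * b)" by transfer (simp add: matrix_scalar_ac scalar_matrix_assoc)
  show "norm (1::'a mx) = 1"
  proof transfer
    have "(*v) (mat 1 :: real^'a^'a) = (\<lambda>x. x)" by auto
    then show "onorm ((*v) (mat 1 :: real^'a^'a)) = 1" by (simp add: onorm_id)
  qed
  show "norm (a * b) \<le> norm a * norm b"
  proof transfer
    fix a b :: "real^'a^'a"
    have "(*v) (a ** b) = (*v) a \<circ> (*v) b" by (auto simp: matrix_vector_mul_assoc)
    then show "onorm ((*v) (a ** b)) \<le> onorm ((*v) a) * onorm ((*v) b)"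
      by (simp add: onorm_compose)
  qed
qed
end


lemma mrep_entry_le: "\<bar>mrep A $ i $ j\<bar> \<le> norm A"
  by transfer (rule matrix_component_le_onorm)

lemma norm_mrep_le: "norm (mrep A) \<le> real CARD('n) * real CARD('n) * norm (A::'n::finite mx)"
proof -
  have "norm (mrep A) \<le> (\<Sum>i\<in>UNIV. norm (mrep A $ i))"
    unfolding norm_vec_def by (rule L2_set_le_sum) simp
  also have "\<dots> \<le> (\<Sum>i\<in>(UNIV::'n set). \<Sum>j\<in>(UNIV::'n set). \<bar>mrep A $ i $ j\<bar>)"
    by (intro sum_mono norm_le_l1_cart)
  also have "\<dots> \<le> (\<Sum>i\<in>(UNIV::'n set). \<Sum>j\<in>(UNIV::'n set). norm A)"
    by (intro sum_mono mrep_entry_le)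
  finally show ?thesis by simp
qed

lemma bounded_linear_mrep: "bounded_linear (mrep :: 'n::finite mx \<Rightarrow> _)"
proof (rule bounded_linear_intro[where K="real CARD('n) * real CARD('n)"])
  fix x y :: "'n mx" and r
  show "mrep (x + y) = mrep x + mrep y" by transfer simp
  show "mrep (r *\<^sub>R x) = r *\<^sub>R mrep x" by transfer simp
  show "norm (mrep x) \<le> norm x * (real CARD('n) * real CARD('n))"
    using norm_mrep_le[of x] by (simp add: mult.commute)
qed

lemma norm_mx_le_entries: "norm (A::'n::finite mx) \<le> (\<Sum>i\<in>UNIV. \<Sum>j\<in>UNIV. \<bar>mrep A $ i $ j\<bar>)"
  by transfer (rule onorm_le_matrix_component_sum)

instance mx :: (finite) banach
proof
  fix X :: "nat \<Rightarrow> 'a mx"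
  assume C: "Cauchy X"
  have "\<exists>L. (\<lambda>m. mrep (X m) $ i $ j) \<longlonglongrightarrow> L" for i j
  proof -
    have "Cauchy (\<lambda>m. mrep (X m) $ i $ j)"
    proof (rule metric_CauchyI)
      fix e :: real assume "0 < e"
      then obtain M where M: "\<forall>m\<ge>M. \<forall>n\<ge>M. dist (X m) (X n) < e" using C metric_CauchyD by blast
      have "dist (mrep (X m) $ i $ j) (mrep (X n) $ i $ j) < e" if "m \<ge> M" "n \<ge> M" for m n
      proof -
        have "dist (mrep (X m) $ i $ j) (mrep (X n) $ i $ j) = \<bar>mrep (X m - X n) $ i $ j\<bar>"
          by (simp add: dist_real_def minus_mx.rep_eq)
        also have "\<dots> \<le> dist (X m) (X n)" by (simp add: dist_norm mrep_entry_le)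
        finally show ?thesis using M that by (meson order_le_less_trans)
      qed
      then show "\<exists>M. \<forall>m\<ge>M. \<forall>n\<ge>M. dist (mrep (X m) $ i $ j) (mrep (X n) $ i $ j) < e" by blast
    qed
    then show ?thesis using Cauchy_convergent_iff convergent_def by blast
  qed
  then obtain L where L: "\<And>i j. (\<lambda>m. mrep (X m) $ i $ j) \<longlonglongrightarrow> L i j" by metis
  define Lm where "Lm = Mx (\<chi> i j. L i j)"
  have "(\<lambda>m. \<Sum>i\<in>UNIV. \<Sum>j\<in>UNIV. \<bar>mrep (X m) $ i $ j - L i j\<bar>) \<longlonglongrightarrow> (\<Sum>i\<in>(UNIV::'a set). \<Sum>j\<in>(UNIV::'a set). \<bar>L i j - L i j\<bar>)"
    by (intro tendsto_intros L)
  then have Z: "(\<lambda>m. \<Sum>i\<in>UNIV. \<Sum>j\<in>UNIV. \<bar>mrep (X m) $ i $ j - L i j\<bar>) \<longlonglongrightarrow> 0" by simp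
  have "(\<lambda>m. norm (X m - Lm)) \<longlonglongrightarrow> 0"
  proof (rule Lim_null_comparison[OF _ Z])
    show "\<forall>\<^sub>F m in sequentially. norm (norm (X m - Lm)) \<le> (\<Sum>i\<in>UNIV. \<Sum>j\<in>UNIV. \<bar>mrep (X m) $ i $ j - L i j\<bar>)"
      using norm_mx_le_entries[of "X _ - Lm"] by (simp add: minus_mx.rep_eq Lm_def Mx_inverse)
  qed
  then have "X \<longlonglongrightarrow> Lm" by (simp add: tendsto_norm_zero_iff LIM_zero_iff)
  then show "convergent X" by (auto simp: convergent_def)
qed

lemma mrep_mult: "mrep (A * B) = mrep A ** mrep B" by transfer simp
lemma mrep_one: "mrep 1 = mat 1" by transfer simp
lemma mrep_pow: "mrep (Mx A ^ k) = matpow A k"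
  by (induct k) (simp_all add: mrep_mult mrep_one Mx_inverse)

lemma mat_exp_mx: "mat_exp A = mrep (exp (Mx A))"
proof -
  have "mrep (exp (Mx A)) = mrep (\<Sum>n. Mx A ^ n /\<^sub>R fact n)" by (simp add: exp_def)
  also have "\<dots> = (\<Sum>n. mrep (Mx A ^ n /\<^sub>R fact n))"
    by (rule bounded_linear.suminf[OF bounded_linear_mrep summable_exp_generic])
  also have "\<dots> = (\<Sum>n. (1 / fact n) *\<^sub>R matpow A n)"
    by (simp add: scaleR_mx.rep_eq mrep_pow divide_inverse_commute)
  finally show ?thesis by (simp add: mat_exp_def)
qed

lemma Mx_add: "Mx (A + B) = Mx A + Mx B" by (simp add: plus_mx_def Mx_inverse)
lemma Mx_mult: "Mx (A ** B) = Mx A * Mx B" by (simp add: times_mx_def Mx_inverse)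
lemma Mx_uminus: "Mx (- A) = - Mx A" by (simp add: uminus_mx_def Mx_inverse)
lemma Mx_zero: "Mx 0 = 0" by (simp add: zero_mx_def)

lemma mat_exp_add:
  assumes "A ** B = B ** A"
  shows "mat_exp (A + B) = mat_exp A ** mat_exp B"
proof -
  have "Mx A * Mx B = Mx B * Mx A" using assms by (metis Mx_mult)
  then show ?thesis by (simp add: mat_exp_mx Mx_add exp_add_commuting mrep_mult)
qed

lemma mat_exp_zero: "mat_exp 0 = mat 1"
  by (simp add: mat_exp_mx Mx_zero mrep_one)

lemma mat_exp_neg: "mat_exp (- A) ** mat_exp A = mat 1"
proof -
  have "exp (- Mx A) * exp (- (- Mx A)) = 1" by (rule exp_minus_inverse)
  then show ?thesis by (simp add: mat_exp_mx Mx_uminus mrep_mult[symmetric] mrep_one)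
qed


lemma Mx_scaleR: "Mx (r *\<^sub>R A) = r *\<^sub>R Mx A" by (simp add: scaleR_mx_def Mx_inverse)
lemma Mx_sum: "Mx (\<Sum>i\<in>I. f i) = (\<Sum>i\<in>I. Mx (f i))"
  by (induct I rule: infinite_finite_induct) (simp_all add: Mx_zero Mx_add)
lemma mrep_inj: "mrep A = mrep B \<Longrightarrow> A = B" by (simp add: mrep_inject)

lemma tstar_add: "tstar (s + t) \<Theta> = tstar s \<Theta> + tstar t \<Theta>"
  unfolding tstar_def by (simp add: scaleR_add_left sum.distrib)
lemma tstar_minus: "tstar (- s) \<Theta> = - tstar s \<Theta>"
  unfolding tstar_def by (simp add: sum_negf)
lemma tstar_zero: "tstar 0 \<Theta> = 0"
  unfolding tstar_def by simp

lemma tstar_comm: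
  assumes "\<forall>i j. \<Theta> i ** \<Theta> j = \<Theta> j ** \<Theta> i"
  shows "tstar s \<Theta> ** tstar t \<Theta> = tstar t \<Theta> ** tstar s \<Theta>"
proof -
  have c: "Mx (\<Theta> i) * Mx (\<Theta> j) = Mx (\<Theta> j) * Mx (\<Theta> i)" for i j
    using assms by (metis Mx_mult)
  have "Mx (tstar s \<Theta>) * Mx (tstar t \<Theta>) = Mx (tstar t \<Theta>) * Mx (tstar s \<Theta>)"
    unfolding tstar_def Mx_sum Mx_scaleR sum_distrib_left sum_distrib_right
    apply (subst sum.swap)
    apply (intro sum.cong refl)
    apply (simp add: c)
    done
  then show ?thesis by (metis Mx_mult Mx_inject UNIV_I)
qed

lemma mat_exp_tstar_add:
  assumes "\<forall>i j. \<Theta> i ** \<Theta> j = \<Theta> j ** \<Theta> i"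
  shows "mat_exp (tstar (s + t) \<Theta>) = mat_exp (tstar s \<Theta>) ** mat_exp (tstar t \<Theta>)"
  unfolding tstar_add by (rule mat_exp_add[OF tstar_comm[OF assms]])

lemma mat_exp_tstar_neg:
  "mat_exp (tstar (- s) \<Theta>) ** mat_exp (tstar s \<Theta>) = mat 1"
  unfolding tstar_minus by (rule mat_exp_neg)

lemma mat_exp_tstar_neg':
  "mat_exp (- tstar s \<Theta>) ** mat_exp (tstar s \<Theta>) = mat 1"
  by (rule mat_exp_neg)

lemma bl_apply: "bounded_linear (\<lambda>M::'n::finite mx. mrep M *v x)"
proof -
  have "linear (\<lambda>N::real^'n^'n. N *v x)"
    by (rule linearI) (simp_all add: matrix_vector_mult_add_rdistrib scaleR_matrix_vector_assoc)
  then have "bounded_linear (\<lambda>N::real^'n^'n. N *v x)" by (simp add: linear_conv_bounded_linear)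
  from bounded_linear_compose[OF this bounded_linear_mrep] show ?thesis .
qed

lemma neg_mv: "(- A) *v v = - (A *v (v::real^'n))"
  by (simp add: matrix_vector_mult_def vec_eq_iff sum_negf)

lemma exp_contract:
  fixes B :: "'n::finite mx"
  assumes pd: "\<forall>x. x \<noteq> 0 \<longrightarrow> 0 < x \<bullet> (mrep B *v x)" and x: "x \<noteq> 0"
  shows "norm (mrep (exp (- B)) *v x) < norm x"
proof -
  define y where "y t = mrep (exp (t *\<^sub>R (- B))) *v x" for t
  have dy: "(y has_vector_derivative (- (mrep B *v y t))) (at t)" for t
  proof -
    have "((\<lambda>t. mrep (exp (t *\<^sub>R (- B))) *v x) has_vector_derivative
        mrep ((- B) * exp (t *\<^sub>R (- B))) *v x) (at t)"
      by (rule bounded_linear.has_vector_derivative[OF bl_apply exp_scaleR_has_vector_derivative_left])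
    moreover have "mrep ((- B) * exp (t *\<^sub>R (- B))) *v x = - (mrep B *v y t)"
      by (simp add: y_def mrep_mult uminus_mx.rep_eq matrix_vector_mul_assoc[symmetric] neg_mv)
    ultimately show ?thesis by (simp add: y_def[abs_def])
  qed
  have ynz: "y t \<noteq> 0" for t
  proof
    assume "y t = 0"
    have "mrep (exp (- (t *\<^sub>R (- B)))) ** mrep (exp (t *\<^sub>R (- B))) = mat 1"
      using exp_minus_inverse[of "- (t *\<^sub>R (- B))"]
      by (simp add: mrep_mult[symmetric] mrep_one)
    then have "x = mrep (exp (- (t *\<^sub>R (- B)))) *v y t"
      by (simp add: y_def matrix_vector_mul_assoc)
    with \<open>y t = 0\<close> x show False by simp
  qed
  define f where "f t = y t \<bullet> y t" for t
  have "\<exists>D. DERIV f t :> D \<and> D < 0" for t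
  proof -
    have d: "(y has_derivative (\<lambda>h. h *\<^sub>R (- (mrep B *v y t)))) (at t)"
      using dy[of t] by (simp add: has_vector_derivative_def)
    have "(f has_derivative (\<lambda>h. y t \<bullet> (h *\<^sub>R (- (mrep B *v y t))) + (h *\<^sub>R (- (mrep B *v y t))) \<bullet> y t)) (at t)"
      unfolding f_def[abs_def] by (rule has_derivative_inner[OF d d])
    moreover have "(\<lambda>h. y t \<bullet> (h *\<^sub>R (- (mrep B *v y t))) + (h *\<^sub>R (- (mrep B *v y t))) \<bullet> y t)
        = (*) (- 2 * (y t \<bullet> (mrep B *v y t)))"
    proof
      fix h
      have "(h *\<^sub>R (- (mrep B *v y t))) \<bullet> y t = y t \<bullet> (h *\<^sub>R (- (mrep B *v y t)))"
        by (rule inner_commute)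
      then show "y t \<bullet> (h *\<^sub>R (- (mrep B *v y t))) + (h *\<^sub>R (- (mrep B *v y t))) \<bullet> y t
        = - 2 * (y t \<bullet> (mrep B *v y t)) * h"
        by (simp add: inner_scaleR_right inner_minus_right inner_commute)
    qed
    ultimately have "DERIV f t :> - 2 * (y t \<bullet> (mrep B *v y t))"
      by (simp add: has_field_derivative_def)
    moreover have "- 2 * (y t \<bullet> (mrep B *v y t)) < 0" using pd ynz[of t] by auto
    ultimately show ?thesis by blast
  qed
  then have "f 1 < f 0" using DERIV_neg_imp_decreasing[of 0 1 f] by auto
  then have "norm (y 1) ^ 2 < norm (y 0) ^ 2" by (simp add: f_def power2_norm_eq_inner)
  then have "norm (y 1) < norm (y 0)" by (rule power_less_imp_less_base) simp
  then show ?thesis by (simp add: y_def mrep_one)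
qed

lemma exp_contract_q:
  fixes B :: "'n::finite mx"
  assumes pd: "\<forall>x. x \<noteq> 0 \<longrightarrow> 0 < x \<bullet> (mrep B *v x)"
  shows "\<exists>q\<ge>0. q < 1 \<and> (\<forall>x. norm (mrep (exp (- B)) *v x) \<le> q * norm x)"
proof -
  define g where "g v = norm (mrep (exp (- B)) *v v)" for v :: "real^'n"
  have cont: "continuous_on (sphere 0 1) g"
    unfolding g_def by (intro continuous_intros)
  obtain b :: "real^'n" where b: "b \<in> Basis" using nonempty_Basis by blast
  then have "b \<in> sphere 0 1" by simp
  then obtain x0 where x0: "x0 \<in> sphere 0 1" "\<forall>v\<in>sphere 0 1. g v \<le> g x0"
    using continuous_attains_sup[OF compact_sphere _ cont] by blast
  have "x0 \<noteq> 0" using x0 by auto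
  have "norm (mrep (exp (- B)) *v x0) < norm x0" by (rule exp_contract[OF pd \<open>x0 \<noteq> 0\<close>])
  then have q1: "g x0 < 1" using x0 by (simp add: g_def)
  have "norm (mrep (exp (- B)) *v x) \<le> g x0 * norm x" for x
  proof (cases "x = 0")
    case True then show ?thesis by simp
  next
    case False
    then have "(1 / norm x) *\<^sub>R x \<in> sphere 0 1" by simp
    then have "g ((1 / norm x) *\<^sub>R x) \<le> g x0" using x0 by blast
    then have "(1 / norm x) * norm (mrep (exp (- B)) *v x) \<le> g x0"
      by (simp add: g_def matrix_vector_mult_scaleR)
    then show ?thesis using False by (simp add: field_simps)
  qed
  moreover have "0 \<le> g x0" by (simp add: g_def)
  ultimately show ?thesis using q1 by blast
qed

lemma exp_scaleR_nat: "exp ((real m) *\<^sub>R (B::'a::{real_normed_algebra_1,banach})) = exp B ^ m"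
proof (induct m)
  case (Suc m)
  have "real (Suc m) *\<^sub>R B = B + real m *\<^sub>R B" by (simp add: scaleR_add_left)
  then have "exp (real (Suc m) *\<^sub>R B) = exp (B + real m *\<^sub>R B)" by simp
  also have "\<dots> = exp B * exp (real m *\<^sub>R B)"
    by (rule exp_add_commuting) (simp add: mult_scaleR_left mult_scaleR_right)
  finally show ?case using Suc by simp
qed simp

lemma mat_exp_decay:
  assumes "pos_def_mat A"
  shows "\<exists>q\<ge>0. q < 1 \<and> (\<forall>(m::nat) x. norm (mat_exp (- (real m *\<^sub>R A)) *v x) \<le> q ^ m * norm x)"
proof -
  have pd: "\<forall>x. x \<noteq> 0 \<longrightarrow> 0 < x \<bullet> (mrep (Mx A) *v x)"
    using assms by (simp add: pos_def_mat_def Mx_inverse)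
  obtain q where q: "q \<ge> 0" "q < 1" "\<And>x. norm (mrep (exp (- Mx A)) *v x) \<le> q * norm x"
    using exp_contract_q[OF pd] by blast
  have "norm (mrep (exp (- Mx A) ^ m) *v x) \<le> q ^ m * norm x" for m x
  proof (induct m)
    case 0 then show ?case by (simp add: mrep_one)
  next
    case (Suc m)
    have "norm (mrep (exp (- Mx A) ^ Suc m) *v x) = norm (mrep (exp (- Mx A)) *v (mrep (exp (- Mx A) ^ m) *v x))"
      by (simp add: mrep_mult matrix_vector_mul_assoc)
    also have "\<dots> \<le> q * norm (mrep (exp (- Mx A) ^ m) *v x)" by (rule q(3))
    also have "\<dots> \<le> q * (q ^ m * norm x)" by (rule mult_left_mono[OF Suc q(1)])
    finally show ?case by simp
  qed
  moreover have "mat_exp (- (real m *\<^sub>R A)) = mrep (exp (- Mx A) ^ m)" for m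
    by (simp add: mat_exp_mx Mx_uminus Mx_scaleR exp_scaleR_nat[symmetric])
  ultimately show ?thesis using q by auto
qed


lemma cp_measD:
  assumes "conv_prob M Xs X"
  shows "X \<in> borel_measurable M" "Xs m \<in> borel_measurable M"
  using assms by (auto simp: conv_prob_def)

lemma tendsto_0_bound:
  fixes f :: "nat \<Rightarrow> real"
  assumes "\<And>m. 0 \<le> f m" "\<forall>\<^sub>F m in sequentially. f m \<le> g m" "g \<longlonglongrightarrow> 0"
  shows "f \<longlonglongrightarrow> 0"
  using assms by (intro tendsto_sandwich[of "\<lambda>_. 0" f sequentially g 0]) auto

context prob_space
begin

lemma prob_union_le: "A \<in> events \<Longrightarrow> B \<in> events \<Longrightarrow> prob (A \<union> B) \<le> prob A + prob B"
  by (rule measure_subadditive) (auto simp: emeasure_finite)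

lemma cp_const:
  assumes [measurable]: "X \<in> borel_measurable M"
  shows "conv_prob M (\<lambda>m. X) X"
  unfolding conv_prob_def by (auto simp: not_less[symmetric])

lemma cp_add:
  assumes A: "conv_prob M Xs X" and B: "conv_prob M Ys Y"
  shows "conv_prob M (\<lambda>m \<omega>. Xs m \<omega> + Ys m \<omega>) (\<lambda>\<omega>. X \<omega> + Y \<omega>)"
proof -
  note [measurable] = cp_measD[OF A] cp_measD[OF B]
  have "(\<lambda>m. prob {\<omega>\<in>space M. e < dist (Xs m \<omega> + Ys m \<omega>) (X \<omega> + Y \<omega>)}) \<longlonglongrightarrow> 0" if e: "e > 0" for e
  proof (rule tendsto_0_bound)
    show "\<forall>\<^sub>F m in sequentially. prob {\<omega>\<in>space M. e < dist (Xs m \<omega> + Ys m \<omega>) (X \<omega> + Y \<omega>)}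
        \<le> prob {\<omega>\<in>space M. e/2 < dist (Xs m \<omega>) (X \<omega>)} + prob {\<omega>\<in>space M. e/2 < dist (Ys m \<omega>) (Y \<omega>)}"
    proof (intro always_eventually allI)
      fix m
      have "prob {\<omega>\<in>space M. e < dist (Xs m \<omega> + Ys m \<omega>) (X \<omega> + Y \<omega>)}
          \<le> prob ({\<omega>\<in>space M. e/2 < dist (Xs m \<omega>) (X \<omega>)} \<union> {\<omega>\<in>space M. e/2 < dist (Ys m \<omega>) (Y \<omega>)})"
      proof (rule finite_measure_mono)
        show "{\<omega>\<in>space M. e < dist (Xs m \<omega> + Ys m \<omega>) (X \<omega> + Y \<omega>)}
          \<subseteq> {\<omega>\<in>space M. e/2 < dist (Xs m \<omega>) (X \<omega>)} \<union> {\<omega>\<in>space M. e/2 < dist (Ys m \<omega>) (Y \<omega>)}"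
        proof (rule subsetI)
          fix \<omega> assume "\<omega> \<in> {\<omega>\<in>space M. e < dist (Xs m \<omega> + Ys m \<omega>) (X \<omega> + Y \<omega>)}"
          then have h: "\<omega> \<in> space M" "e < dist (Xs m \<omega> + Ys m \<omega>) (X \<omega> + Y \<omega>)" by auto
          have "e/2 < dist (Xs m \<omega>) (X \<omega>) \<or> e/2 < dist (Ys m \<omega>) (Y \<omega>)"
            using h(2) dist_triangle_add[of "Xs m \<omega>" "Ys m \<omega>" "X \<omega>" "Y \<omega>"] by linarith
          then show "\<omega> \<in> {\<omega>\<in>space M. e/2 < dist (Xs m \<omega>) (X \<omega>)} \<union> {\<omega>\<in>space M. e/2 < dist (Ys m \<omega>) (Y \<omega>)}"
            using h(1) by blast
        qed
      qed measurable
      also have "\<dots> \<le> prob {\<omega>\<in>space M. e/2 < dist (Xs m \<omega>) (X \<omega>)} + prob {\<omega>\<in>space M. e/2 < dist (Ys m \<omega>) (Y \<omega>)}"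
        by (rule prob_union_le) measurable
      finally show "prob {\<omega>\<in>space M. e < dist (Xs m \<omega> + Ys m \<omega>) (X \<omega> + Y \<omega>)}
        \<le> prob {\<omega>\<in>space M. e/2 < dist (Xs m \<omega>) (X \<omega>)} + prob {\<omega>\<in>space M. e/2 < dist (Ys m \<omega>) (Y \<omega>)}" .
    qed
    have t1: "(\<lambda>m. prob {\<omega>\<in>space M. e/2 < dist (Xs m \<omega>) (X \<omega>)}) \<longlonglongrightarrow> 0"
      using A half_gt_zero[OF e] unfolding conv_prob_def by blast
    have t2: "(\<lambda>m. prob {\<omega>\<in>space M. e/2 < dist (Ys m \<omega>) (Y \<omega>)}) \<longlonglongrightarrow> 0"
      using B half_gt_zero[OF e] unfolding conv_prob_def by blast
    show "(\<lambda>m. prob {\<omega>\<in>space M. e/2 < dist (Xs m \<omega>) (X \<omega>)} + prob {\<omega>\<in>space M. e/2 < dist (Ys m \<omega>) (Y \<omega>)}) \<longlonglongrightarrow> 0"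
      using tendsto_add[OF t1 t2] by simp
  qed simp
  then show ?thesis using A B unfolding conv_prob_def by auto
qed

lemma cp_sum:
  assumes "finite I" "\<And>i. i \<in> I \<Longrightarrow> conv_prob M (Xs i) (X i)"
  shows "conv_prob M (\<lambda>m \<omega>. \<Sum>i\<in>I. Xs i m \<omega>) (\<lambda>\<omega>. \<Sum>i\<in>I. X i \<omega>)"
  using assms
proof (induct I rule: finite_induct)
  case empty
  then show ?case using cp_const[of "\<lambda>_. 0"] by simp
next
  case (insert x F)
  then show ?case using cp_add[of "Xs x" "X x" "\<lambda>m \<omega>. \<Sum>i\<in>F. Xs i m \<omega>" "\<lambda>\<omega>. \<Sum>i\<in>F. X i \<omega>"] by simp
qed

lemma cp_bl:
  assumes f: "bounded_linear f" and A: "conv_prob M Xs X"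
  shows "conv_prob M (\<lambda>m \<omega>. f (Xs m \<omega>)) (\<lambda>\<omega>. f (X \<omega>))"
proof -
  have fm[measurable]: "f \<in> borel_measurable borel"
    using f by (intro borel_measurable_continuous_onI linear_continuous_on)
  note [measurable] = cp_measD[OF A]
  obtain K where K: "K > 0" "\<And>x. norm (f x) \<le> norm x * K" using bounded_linear.pos_bounded[OF f] by blast
  have "(\<lambda>m. prob {\<omega>\<in>space M. e < dist (f (Xs m \<omega>)) (f (X \<omega>))}) \<longlonglongrightarrow> 0" if e: "e > 0" for e
  proof (rule tendsto_0_bound)
    show "\<forall>\<^sub>F m in sequentially. prob {\<omega>\<in>space M. e < dist (f (Xs m \<omega>)) (f (X \<omega>))}
        \<le> prob {\<omega>\<in>space M. e / K < dist (Xs m \<omega>) (X \<omega>)}"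
    proof (intro always_eventually allI finite_measure_mono)
      fix m
      show "{\<omega>\<in>space M. e < dist (f (Xs m \<omega>)) (f (X \<omega>))} \<subseteq> {\<omega>\<in>space M. e / K < dist (Xs m \<omega>) (X \<omega>)}"
      proof safe
        fix \<omega> assume "\<omega> \<in> space M" "e < dist (f (Xs m \<omega>)) (f (X \<omega>))"
        moreover have "dist (f (Xs m \<omega>)) (f (X \<omega>)) \<le> dist (Xs m \<omega>) (X \<omega>) * K"
          using K(2)[of "Xs m \<omega> - X \<omega>"] by (simp add: dist_norm linear_diff[OF bounded_linear.linear[OF f]])
        ultimately show "e / K < dist (Xs m \<omega>) (X \<omega>)" using K(1) by (simp add: divide_less_eq)
      qed
    qed measurable
    show "(\<lambda>m. prob {\<omega>\<in>space M. e / K < dist (Xs m \<omega>) (X \<omega>)}) \<longlonglongrightarrow> 0"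
      using A e K(1) unfolding conv_prob_def by simp
  qed simp
  then show ?thesis using A unfolding conv_prob_def by auto
qed

lemma cp_transform:
  assumes A: "conv_prob M Xs X"
    and ev: "\<forall>\<^sub>F m in sequentially. AE \<omega> in M. Ys m \<omega> = Xs m \<omega>"
    and [measurable]: "\<And>m. Ys m \<in> borel_measurable M" "Y \<in> borel_measurable M"
    and ae: "AE \<omega> in M. Y \<omega> = X \<omega>"
  shows "conv_prob M Ys Y"
proof -
  note [measurable] = cp_measD[OF A]
  have "(\<lambda>m. prob {\<omega>\<in>space M. e < dist (Ys m \<omega>) (Y \<omega>)}) \<longlonglongrightarrow> 0" if e: "e > 0" for e
  proof -
    have "\<forall>\<^sub>F m in sequentially. prob {\<omega>\<in>space M. e < dist (Xs m \<omega>) (X \<omega>)} = prob {\<omega>\<in>space M. e < dist (Ys m \<omega>) (Y \<omega>)}"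
      using ev
    proof eventually_elim
      case (elim m)
      show ?case
      proof (rule finite_measure_eq_AE)
        show "AE x in M. (x \<in> {\<omega>\<in>space M. e < dist (Xs m \<omega>) (X \<omega>)}) = (x \<in> {\<omega>\<in>space M. e < dist (Ys m \<omega>) (Y \<omega>)})"
          using elim ae by eventually_elim auto
      qed measurable
    qed
    moreover have "(\<lambda>m. prob {\<omega>\<in>space M. e < dist (Xs m \<omega>) (X \<omega>)}) \<longlonglongrightarrow> 0"
      using A e by (simp add: conv_prob_def)
    ultimately show ?thesis by (rule Lim_transform_eventually[rotated])
  qed
  then show ?thesis by (simp add: conv_prob_def)
qed

lemma cp_unique:
  assumes A: "conv_prob M Xs X" and B: "conv_prob M Xs Y"
  shows "AE \<omega> in M. X \<omega> = Y \<omega>"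
proof -
  note [measurable] = cp_measD[OF A] cp_measD[OF B]
  have z: "prob {\<omega>\<in>space M. e < dist (X \<omega>) (Y \<omega>)} = 0" if e: "e > 0" for e
  proof -
    have "prob {\<omega>\<in>space M. e < dist (X \<omega>) (Y \<omega>)} \<le> 0"
    proof (rule LIMSEQ_le_const)
      have t1: "(\<lambda>m. prob {\<omega>\<in>space M. e/2 < dist (Xs m \<omega>) (X \<omega>)}) \<longlonglongrightarrow> 0"
        using A half_gt_zero[OF e] unfolding conv_prob_def by blast
      have t2: "(\<lambda>m. prob {\<omega>\<in>space M. e/2 < dist (Xs m \<omega>) (Y \<omega>)}) \<longlonglongrightarrow> 0"
        using B half_gt_zero[OF e] unfolding conv_prob_def by blast
      show "(\<lambda>m. prob {\<omega>\<in>space M. e/2 < dist (Xs m \<omega>) (X \<omega>)} + prob {\<omega>\<in>space M. e/2 < dist (Xs m \<omega>) (Y \<omega>)}) \<longlonglongrightarrow> 0"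
        using tendsto_add[OF t1 t2] by simp
      show "\<exists>N. \<forall>n\<ge>N. prob {\<omega>\<in>space M. e < dist (X \<omega>) (Y \<omega>)}
          \<le> prob {\<omega>\<in>space M. e/2 < dist (Xs n \<omega>) (X \<omega>)} + prob {\<omega>\<in>space M. e/2 < dist (Xs n \<omega>) (Y \<omega>)}"
      proof (intro exI allI impI)
        fix m :: nat
        have "prob {\<omega>\<in>space M. e < dist (X \<omega>) (Y \<omega>)}
          \<le> prob ({\<omega>\<in>space M. e/2 < dist (Xs m \<omega>) (X \<omega>)} \<union> {\<omega>\<in>space M. e/2 < dist (Xs m \<omega>) (Y \<omega>)})"
        proof (rule finite_measure_mono)
          show "{\<omega>\<in>space M. e < dist (X \<omega>) (Y \<omega>)}
            \<subseteq> {\<omega>\<in>space M. e/2 < dist (Xs m \<omega>) (X \<omega>)} \<union> {\<omega>\<in>space M. e/2 < dist (Xs m \<omega>) (Y \<omega>)}"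
          proof (rule subsetI)
            fix \<omega> assume "\<omega> \<in> {\<omega>\<in>space M. e < dist (X \<omega>) (Y \<omega>)}"
            then have h: "\<omega> \<in> space M" "e < dist (X \<omega>) (Y \<omega>)" by auto
            have "e/2 < dist (Xs m \<omega>) (X \<omega>) \<or> e/2 < dist (Xs m \<omega>) (Y \<omega>)"
              using h(2) dist_triangle[of "X \<omega>" "Y \<omega>" "Xs m \<omega>"] dist_commute[of "X \<omega>" "Xs m \<omega>"] by linarith
            then show "\<omega> \<in> {\<omega>\<in>space M. e/2 < dist (Xs m \<omega>) (X \<omega>)} \<union> {\<omega>\<in>space M. e/2 < dist (Xs m \<omega>) (Y \<omega>)}"
              using h(1) by blast
          qed
        qed measurable
        also have "\<dots> \<le> prob {\<omega>\<in>space M. e/2 < dist (Xs m \<omega>) (X \<omega>)} + prob {\<omega>\<in>space M. e/2 < dist (Xs m \<omega>) (Y \<omega>)}"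
          by (rule prob_union_le) measurable
        finally show "prob {\<omega>\<in>space M. e < dist (X \<omega>) (Y \<omega>)}
          \<le> prob {\<omega>\<in>space M. e/2 < dist (Xs m \<omega>) (X \<omega>)} + prob {\<omega>\<in>space M. e/2 < dist (Xs m \<omega>) (Y \<omega>)}" .
      qed
    qed
    then show ?thesis using measure_nonneg[of M] by (simp add: antisym)
  qed
  have "AE \<omega> in M. \<forall>k::nat. \<not> (1 / Suc k < dist (X \<omega>) (Y \<omega>))"
  proof (subst AE_all_countable, intro allI)
    fix k :: nat
    have "{\<omega>\<in>space M. 1 / Suc k < dist (X \<omega>) (Y \<omega>)} \<in> sets M" by measurable
    then show "AE \<omega> in M. \<not> (1 / Suc k < dist (X \<omega>) (Y \<omega>))"
      using z[of "1 / Suc k"] by (simp add: prob_Collect_eq_0)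
  qed
  then show ?thesis
  proof (rule AE_mp, intro AE_I2 impI)
    fix \<omega> assume h: "\<forall>k::nat. \<not> (1 / Suc k < dist (X \<omega>) (Y \<omega>))"
    show "X \<omega> = Y \<omega>"
    proof (rule ccontr)
      assume "X \<omega> \<noteq> Y \<omega>"
      then have "dist (X \<omega>) (Y \<omega>) > 0" by simp
      then obtain k where "inverse (real (Suc k)) < dist (X \<omega>) (Y \<omega>)" using reals_Archimedean by blast
      with h show False by (simp add: inverse_eq_divide)
    qed
  qed
qed

lemma cp_shift:
  assumes "conv_prob M Xs X"
  shows "conv_prob M (\<lambda>m. Xs (m + k)) X"
  using assms unfolding conv_prob_def
  by (auto intro: LIMSEQ_ignore_initial_segment[where k=k, where a=0, simplified])

end


lemma (in prob_space) cp_zero_bound: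
  fixes Xs :: "nat \<Rightarrow> 'a \<Rightarrow> real^'n" and Z :: "'a \<Rightarrow> real^'k"
  assumes [measurable]: "Z \<in> borel_measurable M" "\<And>m. Xs m \<in> borel_measurable M"
    and c: "c \<longlonglongrightarrow> 0" "\<And>m. 0 \<le> c m"
    and b: "\<And>m e. prob {\<omega>\<in>space M. e < norm (Xs m \<omega>)} \<le> prob {\<omega>\<in>space M. e < c m * norm (Z \<omega>)}"
  shows "conv_prob M Xs (\<lambda>\<omega>. 0)"
proof -
  define A where "A k = {\<omega>\<in>space M. real k < norm (Z \<omega>)}" for k :: nat
  have Am: "A k \<in> sets M" for k unfolding A_def by measurable
  have "decseq A" unfolding decseq_def A_def by auto
  moreover have "(\<Inter>k. A k) = {}"
  proof safe
    fix \<omega> assume h: "\<omega> \<in> (\<Inter>k. A k)"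
    obtain k :: nat where k: "norm (Z \<omega>) < real k" using reals_Archimedean2 by blast
    from h have "\<omega> \<in> A k" by blast
    with k show "\<omega> \<in> {}" by (simp add: A_def)
  qed
  ultimately have lim: "(\<lambda>k. prob (A k)) \<longlonglongrightarrow> 0"
    using finite_Lim_measure_decseq[of A] Am by auto
  have "(\<lambda>m. prob {\<omega>\<in>space M. e < dist (Xs m \<omega>) 0}) \<longlonglongrightarrow> 0" if e: "e > 0" for e
  proof (rule order_tendstoI)
    fix r :: real assume "r < 0"
    then show "\<forall>\<^sub>F m in sequentially. r < prob {\<omega>\<in>space M. e < dist (Xs m \<omega>) 0}"
      by (intro always_eventually allI) (metis measure_nonneg order.strict_trans2)
  next
    fix r :: real assume "0 < r"
    have "\<forall>\<^sub>F k in sequentially. prob (A k) < r" using lim \<open>0 < r\<close> by (rule order_tendstoD(2))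
    then obtain N where "\<forall>k\<ge>N. prob (A k) < r" by (auto simp: eventually_sequentially)
    then obtain k where k: "prob (A k) < r" by blast
    have "0 < e / (real k + 1)" using e by simp
    then have "\<forall>\<^sub>F m in sequentially. c m < e / (real k + 1)" using c(1) order_tendstoD(2) by blast
    then show "\<forall>\<^sub>F m in sequentially. prob {\<omega>\<in>space M. e < dist (Xs m \<omega>) 0} < r"
    proof eventually_elim
      case (elim m)
      have "prob {\<omega>\<in>space M. e < dist (Xs m \<omega>) 0} \<le> prob {\<omega>\<in>space M. e < c m * norm (Z \<omega>)}"
        using b by simp
      also have "\<dots> \<le> prob (A k)"
      proof (rule finite_measure_mono[OF _ Am])
        show "{\<omega> \<in> space M. e < c m * norm (Z \<omega>)} \<subseteq> A k"
        proof safe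
          fix \<omega> assume \<omega>: "\<omega> \<in> space M" "e < c m * norm (Z \<omega>)"
          show "\<omega> \<in> A k"
          proof (rule ccontr)
            assume "\<omega> \<notin> A k"
            then have "norm (Z \<omega>) \<le> real k" using \<omega> by (auto simp: A_def)
            then have "c m * norm (Z \<omega>) \<le> c m * (real k + 1)" using c(2)[of m] by (intro mult_left_mono) auto
            also have "\<dots> < e" using elim by (simp add: field_simps)
            finally show False using \<omega> by simp
          qed
        qed
      qed
      finally show ?case using k by simp
    qed
  qed
  then show ?thesis unfolding conv_prob_def by auto
qed

lemma eq_law_map:
  fixes X X' :: "'i \<Rightarrow> 'w \<Rightarrow> 'b::topological_space" and Z Z' :: "'j \<Rightarrow> 'w \<Rightarrow> 'c::topological_space"
  assumes X[measurable]: "\<And>i. X i \<in> borel_measurable M" "\<And>i. X' i \<in> borel_measurable M"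
    and eq: "eq_law M X X'"
    and K: "\<And>u. finite (K u)" and h: "\<And>u. h u \<in> borel_measurable (PiM (K u) (\<lambda>_. borel))"
    and Z: "\<And>u \<omega>. Z u \<omega> = h u (restrict (\<lambda>i. X i \<omega>) (K u))"
    and Z': "\<And>u \<omega>. Z' u \<omega> = h u (restrict (\<lambda>i. X' i \<omega>) (K u))"
  shows "eq_law M Z Z'"
  unfolding eq_law_def
proof (intro allI impI)
  fix T :: "'j set" assume T: "finite T"
  define K' where "K' = (\<Union>u\<in>T. K u)"
  have fK': "finite K'" using T K by (simp add: K'_def)
  define \<Psi> where "\<Psi> z = restrict (\<lambda>u. h u (restrict z (K u))) T" for z :: "'i \<Rightarrow> 'b"
  have \<Psi>m: "\<Psi> \<in> measurable (PiM K' (\<lambda>_. borel)) (PiM T (\<lambda>_. borel))"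
    unfolding \<Psi>_def
  proof (rule measurable_restrict)
    fix u assume "u \<in> T"
    then have "K u \<subseteq> K'" by (auto simp: K'_def)
    show "(\<lambda>z. h u (restrict z (K u))) \<in> borel_measurable (PiM K' (\<lambda>_. borel))"
      using measurable_comp[OF measurable_restrict_subset[OF \<open>K u \<subseteq> K'\<close>] h[of u]]
      by (simp add: comp_def)
  qed
  have R: "(\<lambda>\<omega>. restrict (\<lambda>i. X i \<omega>) K') \<in> measurable M (PiM K' (\<lambda>_. borel))"
    by (rule measurable_restrict) simp
  have R': "(\<lambda>\<omega>. restrict (\<lambda>i. X' i \<omega>) K') \<in> measurable M (PiM K' (\<lambda>_. borel))"
    by (rule measurable_restrict) simp
  have rr: "restrict (restrict f K') (K u) = restrict f (K u)" if "u \<in> T" for f :: "'i \<Rightarrow> 'b" and u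
    using that by (auto simp: restrict_def K'_def fun_eq_iff)
  have rr2: "K' \<inter> K u = K u" if "u \<in> T" for u
    using that by (auto simp: K'_def)
  have e1: "(\<lambda>\<omega>. restrict (\<lambda>u. Z u \<omega>) T) = \<Psi> \<circ> (\<lambda>\<omega>. restrict (\<lambda>i. X i \<omega>) K')"
    by (rule ext) (auto simp: \<Psi>_def Z rr rr2 restrict_def[of _ T] fun_eq_iff)
  have e2: "(\<lambda>\<omega>. restrict (\<lambda>u. Z' u \<omega>) T) = \<Psi> \<circ> (\<lambda>\<omega>. restrict (\<lambda>i. X' i \<omega>) K')"
    by (rule ext) (auto simp: \<Psi>_def Z' rr rr2 restrict_def[of _ T] fun_eq_iff)
  have "distr M (PiM K' (\<lambda>_. borel)) (\<lambda>\<omega>. restrict (\<lambda>i. X i \<omega>) K')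
      = distr M (PiM K' (\<lambda>_. borel)) (\<lambda>\<omega>. restrict (\<lambda>i. X' i \<omega>) K')"
    using eq fK' unfolding eq_law_def by blast
  then show "distr M (PiM T (\<lambda>_. borel)) (\<lambda>\<omega>. restrict (\<lambda>u. Z u \<omega>) T)
      = distr M (PiM T (\<lambda>_. borel)) (\<lambda>\<omega>. restrict (\<lambda>u. Z' u \<omega>) T)"
    unfolding e1 e2 distr_distr[OF \<Psi>m R, symmetric] distr_distr[OF \<Psi>m R', symmetric] by simp
qed

lemma eq_law_apply:
  fixes X X' :: "'i \<Rightarrow> 'w \<Rightarrow> 'b::topological_space" and f :: "'j \<Rightarrow> 'b \<Rightarrow> 'c::topological_space"
  assumes [measurable]: "\<And>i. X i \<in> borel_measurable M" "\<And>i. X' i \<in> borel_measurable M"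
    and eq: "eq_law M X X'"
    and f: "\<And>u. f u \<in> borel_measurable borel"
  shows "eq_law M (\<lambda>u \<omega>. f u (X (g u) \<omega>)) (\<lambda>u \<omega>. f u (X' (g u) \<omega>))"
proof (rule eq_law_map[OF assms(1,2) eq, where K="\<lambda>u. {g u}" and h="\<lambda>u z. f u (z (g u))"])
  show "(\<lambda>z. f u (z (g u))) \<in> borel_measurable (PiM {g u} (\<lambda>_. borel))" for u
    using measurable_comp[OF measurable_component_singleton[of "g u" "{g u}" "\<lambda>_. borel"] f[of u]]
    by (simp add: comp_def)
qed auto

lemma eq_law_sym: "eq_law M X X' \<Longrightarrow> eq_law M X' X"
  unfolding eq_law_def by metis

lemma eq_law_trans: "eq_law M X X' \<Longrightarrow> eq_law M X' X'' \<Longrightarrow> eq_law M X X''"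
  unfolding eq_law_def by metis

lemma eq_law_AE:
  fixes X Y :: "'i \<Rightarrow> 'w \<Rightarrow> 'b::topological_space"
  assumes [measurable]: "\<And>i. X i \<in> borel_measurable M" "\<And>i. Y i \<in> borel_measurable M"
    and ae: "\<And>i. AE \<omega> in M. X i \<omega> = Y i \<omega>"
  shows "eq_law M X Y"
  unfolding eq_law_def
proof (intro allI impI)
  fix T :: "'i set" assume T: "finite T"
  have "AE \<omega> in M. \<forall>t\<in>T. X t \<omega> = Y t \<omega>" using T ae by (rule AE_finite_allI)
  then have "AE \<omega> in M. restrict (\<lambda>t. X t \<omega>) T = restrict (\<lambda>t. Y t \<omega>) T"
    by eventually_elim (auto simp: restrict_def fun_eq_iff)
  then show "distr M (PiM T (\<lambda>_. borel)) (\<lambda>\<omega>. restrict (\<lambda>t. X t \<omega>) T)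
      = distr M (PiM T (\<lambda>_. borel)) (\<lambda>\<omega>. restrict (\<lambda>t. Y t \<omega>) T)"
    by (intro distr_cong_AE) (auto intro!: measurable_restrict)
qed

lemma eq_law_emeasure:
  fixes X X' :: "'i \<Rightarrow> 'w \<Rightarrow> 'b::topological_space"
  assumes [measurable]: "\<And>i. X i \<in> borel_measurable M" "\<And>i. X' i \<in> borel_measurable M"
    and eq: "eq_law M X X'" and A: "A \<in> sets borel"
  shows "emeasure M {\<omega>\<in>space M. X t \<omega> \<in> A} = emeasure M {\<omega>\<in>space M. X' t \<omega> \<in> A}"
proof -
  have d: "distr M (PiM {t} (\<lambda>_. borel)) (\<lambda>\<omega>. restrict (\<lambda>t. X t \<omega>) {t})
      = distr M (PiM {t} (\<lambda>_. borel)) (\<lambda>\<omega>. restrict (\<lambda>t. X' t \<omega>) {t})"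
    using eq unfolding eq_law_def by blast
  have S: "PiE {t} (\<lambda>_. A) \<in> sets (PiM {t} (\<lambda>_. borel))" using A by (intro sets_PiM_I_finite) auto
  have m1: "(\<lambda>\<omega>. restrict (\<lambda>t. X t \<omega>) {t}) \<in> measurable M (PiM {t} (\<lambda>_. borel))"
    by (rule measurable_restrict) simp
  have m2: "(\<lambda>\<omega>. restrict (\<lambda>t. X' t \<omega>) {t}) \<in> measurable M (PiM {t} (\<lambda>_. borel))"
    by (rule measurable_restrict) simp
  have p1: "(\<lambda>\<omega>. restrict (\<lambda>t. X t \<omega>) {t}) -` PiE {t} (\<lambda>_. A) \<inter> space M = {\<omega>\<in>space M. X t \<omega> \<in> A}"
    by (auto simp: PiE_iff)
  have p2: "(\<lambda>\<omega>. restrict (\<lambda>t. X' t \<omega>) {t}) -` PiE {t} (\<lambda>_. A) \<inter> space M = {\<omega>\<in>space M. X' t \<omega> \<in> A}"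
    by (auto simp: PiE_iff)
  show ?thesis
    using arg_cong[OF d, of "\<lambda>N. emeasure N (PiE {t} (\<lambda>_. A))"]
    unfolding emeasure_distr[OF m1 S] emeasure_distr[OF m2 S] p1 p2 .
qed


definition boxs :: "(int,'N::finite) vec \<Rightarrow> (int,'N) vec \<Rightarrow> (int,'N) vec set" where
  "boxs a b = {j. \<forall>l. a$l \<le> j$l \<and> j$l \<le> b$l}"

definition corner :: "(int,'N::finite) vec \<Rightarrow> (int,'N) vec \<Rightarrow> 'N set \<Rightarrow> (int,'N) vec" where
  "corner a b S = (\<chi> l. if l \<in> S then a$l - 1 else b$l)"

lemma finite_boxs: "finite (boxs (a::(int,'N::finite) vec) b)"
proof -
  have "boxs a b \<subseteq> vec_lambda ` (PiE UNIV (\<lambda>l. {a$l..b$l}))"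
  proof
    fix j assume "j \<in> boxs a b"
    then have "vec_nth j \<in> PiE UNIV (\<lambda>l. {a$l..b$l})" by (auto simp: boxs_def)
    then show "j \<in> vec_lambda ` (PiE UNIV (\<lambda>l. {a$l..b$l}))" by (metis image_eqI vec_nth_inverse)
  qed
  moreover have "finite (PiE (UNIV::'N set) (\<lambda>l. {a$l..b$l}))" by (intro finite_PiE) auto
  ultimately show ?thesis by (metis finite_imageI finite_subset)
qed

lemma box_sum_boxs: "box_sum \<Theta> G t a \<omega> = (\<Sum>j\<in>boxs a t. mat_exp (tstar j \<Theta>) *v delta G j \<omega>)"
  by (simp add: box_sum_def boxs_def)

lemma prod_neg_finite: "finite S \<Longrightarrow> (\<Prod>l\<in>S. - g l) = (-1::real)^card S * (\<Prod>l\<in>S. g l)"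
  by (induct S rule: finite_induct) auto

lemma prod_of_bool: "finite A \<Longrightarrow> (\<Prod>l\<in>A. (of_bool (P l)::real)) = of_bool (\<forall>l\<in>A. P l)"
  by (induct A rule: finite_induct) auto

lemma prod_of_bool_UNIV: "(\<Prod>l\<in>(UNIV::'N::finite set). (of_bool (P l)::real)) = of_bool (\<forall>l. P l)"
  using prod_of_bool[of "UNIV::'N set" P] by simp

lemma sum_pow_prod:
  fixes f :: "'N::finite \<Rightarrow> bool \<Rightarrow> real"
  shows "(\<Sum>S\<in>Pow (UNIV::'N set). (-1)^card S * (\<Prod>l\<in>UNIV. f l (l \<in> S)))
       = (\<Prod>l\<in>UNIV. f l False - f l True)"
proof -
  have "(\<Prod>l\<in>UNIV. f l False - f l True) = (\<Prod>l\<in>UNIV. (- f l True) + f l False)" by simp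
  also have "\<dots> = (\<Sum>S\<in>Pow UNIV. (\<Prod>l\<in>S. - f l True) * (\<Prod>l\<in>UNIV - S. f l False))"
    by (rule prod_add) simp
  also have "\<dots> = (\<Sum>S\<in>Pow UNIV. (-1)^card S * (\<Prod>l\<in>UNIV. f l (l \<in> S)))"
  proof (rule sum.cong[OF refl])
    fix S :: "'N set" assume "S \<in> Pow UNIV"
    have "(\<Prod>l\<in>UNIV. f l (l \<in> S)) = (\<Prod>l\<in>UNIV - S. f l (l \<in> S)) * (\<Prod>l\<in>S. f l (l \<in> S))"
      by (rule prod.subset_diff) simp_all
    also have "\<dots> = (\<Prod>l\<in>UNIV - S. f l False) * (\<Prod>l\<in>S. f l True)"
      by (intro arg_cong2[where f="(*)"] prod.cong) auto
    finally show "(\<Prod>l\<in>S. - f l True) * (\<Prod>l\<in>UNIV - S. f l False) = (-1)^card S * (\<Prod>l\<in>UNIV. f l (l \<in> S))"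
      by (simp add: prod_neg_finite)
  qed
  finally show ?thesis by simp
qed

lemma ofb_scale: "of_bool P *\<^sub>R (v::'v::real_vector) = (if P then v else 0)"
  by simp

lemma sum_pick: "finite B \<Longrightarrow> c \<in> B \<Longrightarrow> (\<Sum>i\<in>B. of_bool (i = c) *\<^sub>R (Z i::'v::real_vector)) = Z c"
  by (simp add: ofb_scale sum.delta')

lemma sum_sub_coef: "finite B \<Longrightarrow> C \<subseteq> B \<Longrightarrow> (\<Sum>i\<in>C. (Z i::'v::real_vector)) = (\<Sum>i\<in>B. of_bool (i \<in> C) *\<^sub>R Z i)"
  by (simp add: ofb_scale sum.inter_restrict[symmetric] Int_absorb1)

lemma swap_coef:
  fixes Z :: "'i \<Rightarrow> 'v::real_vector"
  shows "(\<Sum>S\<in>A. s S *\<^sub>R (\<Sum>i\<in>B. c S i *\<^sub>R Z i)) = (\<Sum>i\<in>B. (\<Sum>S\<in>A. s S * c S i) *\<^sub>R Z i)"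
  by (simp add: scaleR_sum_right scaleR_sum_left sum.swap[of _ A B])

lemma ind_vec_nth: "ind_vec S $ l = (if l \<in> S then 1 else 0)"
  by (simp add: ind_vec_def)

lemma box_telescope:
  fixes Z :: "(int,'N::finite) vec \<Rightarrow> 'w \<Rightarrow> real^'n"
  assumes ab: "\<forall>l. a$l \<le> b$l + 1"
  shows "(\<Sum>j\<in>boxs a b. delta Z j \<omega>) = (\<Sum>S\<in>Pow UNIV. (-1)^card S *\<^sub>R Z (corner a b S) \<omega>)"
proof -
  define lo :: "(int,'N) vec" where "lo = (\<chi> l. a$l - 1)"
  define B where "B = boxs lo b"
  have fB: "finite B" by (simp add: B_def finite_boxs)
  have L1: "(\<Sum>j\<in>boxs a b. Z (j - ind_vec S) \<omega>) = (\<Sum>i\<in>B. of_bool (i + ind_vec S \<in> boxs a b) *\<^sub>R Z i \<omega>)" for S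
  proof -
    define C where "C = (\<lambda>j. j - ind_vec S) ` boxs a b"
    have "inj_on (\<lambda>j. j - ind_vec S) (boxs a b)" by (auto simp: inj_on_def)
    then have "(\<Sum>j\<in>boxs a b. Z (j - ind_vec S) \<omega>) = (\<Sum>i\<in>C. Z i \<omega>)"
      by (simp add: C_def sum.reindex)
    also have "\<dots> = (\<Sum>i\<in>B. of_bool (i \<in> C) *\<^sub>R Z i \<omega>)"
    proof (rule sum_sub_coef[OF fB])
      show "C \<subseteq> B"
      proof
        fix x assume "x \<in> C"
        then obtain j where j: "j \<in> boxs a b" "x = j - ind_vec S" by (auto simp: C_def)
        have "lo$l \<le> x$l \<and> x$l \<le> b$l" for l
        proof -
          have "a$l \<le> j$l" "j$l \<le> b$l" using j(1) by (auto simp: boxs_def)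
          moreover have "0 \<le> ind_vec S $ l" "ind_vec S $ l \<le> 1" by (auto simp: ind_vec_nth)
          ultimately show ?thesis using j(2) by (simp add: lo_def)
        qed
        then show "x \<in> B" by (simp add: B_def boxs_def)
      qed
    qed
    also have "\<dots> = (\<Sum>i\<in>B. of_bool (i + ind_vec S \<in> boxs a b) *\<^sub>R Z i \<omega>)"
    proof (rule sum.cong[OF refl])
      fix i
      have "i \<in> C \<longleftrightarrow> i + ind_vec S \<in> boxs a b"
      proof
        assume "i \<in> C"
        then obtain j where "j \<in> boxs a b" "i = j - ind_vec S" by (auto simp: C_def)
        then show "i + ind_vec S \<in> boxs a b" by simp
      next
        assume h: "i + ind_vec S \<in> boxs a b"
        have "i = (i + ind_vec S) - ind_vec S" by simp
        with h show "i \<in> C" unfolding C_def by blast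
      qed
      then show "of_bool (i \<in> C) *\<^sub>R Z i \<omega> = of_bool (i + ind_vec S \<in> boxs a b) *\<^sub>R Z i \<omega>" by simp
    qed
    finally show ?thesis .
  qed
  have "(\<Sum>j\<in>boxs a b. delta Z j \<omega>) = (\<Sum>S\<in>Pow UNIV. (-1)^card S *\<^sub>R (\<Sum>j\<in>boxs a b. Z (j - ind_vec S) \<omega>))"
    unfolding delta_def by (simp add: scaleR_sum_right sum.swap[of _ "boxs a b"])
  also have "\<dots> = (\<Sum>i\<in>B. (\<Sum>S\<in>Pow UNIV. (-1)^card S * of_bool (i + ind_vec S \<in> boxs a b)) *\<^sub>R Z i \<omega>)"
    unfolding L1 by (rule swap_coef)
  also have "\<dots> = (\<Sum>i\<in>B. (\<Sum>S\<in>Pow UNIV. (-1)^card S * of_bool (i = corner a b S)) *\<^sub>R Z i \<omega>)"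
  proof (rule sum.cong[OF refl])
    fix i
    define f1 where "f1 l \<beta> = (of_bool (a$l \<le> i$l + (if \<beta> then 1 else 0) \<and> i$l + (if \<beta> then 1 else 0) \<le> b$l) :: real)" for l \<beta>
    define f2 where "f2 l \<beta> = (of_bool (i$l = (if \<beta> then a$l - 1 else b$l)) :: real)" for l \<beta>
    have e1: "of_bool (i + ind_vec S \<in> boxs a b) = (\<Prod>l\<in>UNIV. f1 l (l \<in> S))" for S
      unfolding f1_def prod_of_bool_UNIV by (simp add: boxs_def ind_vec_nth)
    have e2: "of_bool (i = corner a b S) = (\<Prod>l\<in>UNIV. f2 l (l \<in> S))" for S
      unfolding f2_def prod_of_bool_UNIV by (simp add: corner_def vec_eq_iff)
    have e3: "f1 l False - f1 l True = f2 l False - f2 l True" for l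
      using ab[rule_format, of l] unfolding f1_def f2_def by (simp only: of_bool_def if_True if_False) (smt (verit))
    show "(\<Sum>S\<in>Pow UNIV. (-1)^card S * of_bool (i + ind_vec S \<in> boxs a b)) *\<^sub>R Z i \<omega>
        = (\<Sum>S\<in>Pow UNIV. (-1)^card S * of_bool (i = corner a b S)) *\<^sub>R Z i \<omega>"
      unfolding e1 e2 sum_pow_prod e3 ..
  qed
  also have "\<dots> = (\<Sum>S\<in>Pow UNIV. (-1)^card S *\<^sub>R (\<Sum>i\<in>B. of_bool (i = corner a b S) *\<^sub>R Z i \<omega>))"
    by (rule swap_coef[symmetric])
  also have "\<dots> = (\<Sum>S\<in>Pow UNIV. (-1)^card S *\<^sub>R Z (corner a b S) \<omega>)"
  proof (rule sum.cong[OF refl])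
    fix S :: "'N set"
    have "lo$l \<le> corner a b S $ l \<and> corner a b S $ l \<le> b$l" for l
      using ab[rule_format, of l] by (simp add: corner_def lo_def)
    then have "corner a b S \<in> B" by (simp add: B_def boxs_def)
    then show "(-1)^card S *\<^sub>R (\<Sum>i\<in>B. of_bool (i = corner a b S) *\<^sub>R Z i \<omega>) = (-1)^card S *\<^sub>R Z (corner a b S) \<omega>"
      by (simp add: sum_pick[OF fB])
  qed
  finally show ?thesis .
qed


lemma rho_diff:
  "(if 0 \<le> c then of_bool (1 \<le> k \<and> k \<le> c) else - of_bool (c + 1 \<le> k \<and> k \<le> (0::int)))
   - (if 0 \<le> c - 1 then of_bool (1 \<le> k \<and> k \<le> c - 1) else - of_bool (c - 1 + 1 \<le> k \<and> k \<le> 0))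
   = (of_bool (k = c) :: real)"
  by (simp only: of_bool_def) (smt (verit))

lemma prod_sign_UNIV: "(\<Prod>l\<in>(UNIV::'N::finite set). (if P l then -1 else 1::real)) = (-1)^card {l. P l}"
  by (simp add: prod.If_cases)

lemma delta_P:
  fixes W :: "(int,'N::finite) vec \<Rightarrow> real^'n"
  shows "(\<Sum>S\<in>Pow UNIV. (-1)^card S *\<^sub>R ((-1)^card {l. (t - ind_vec S)$l < 0} *\<^sub>R (\<Sum>j\<in>M_range (t - ind_vec S). W j))) = W t"
proof -
  define lo :: "(int,'N) vec" where "lo = (\<chi> l. - \<bar>t$l\<bar> - 1)"
  define hi :: "(int,'N) vec" where "hi = (\<chi> l. \<bar>t$l\<bar> + 1)"
  define B where "B = boxs lo hi"
  have fB: "finite B" by (simp add: B_def finite_boxs)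
  define \<rho> :: "int \<Rightarrow> int \<Rightarrow> real" where
    "\<rho> c k = (if 0 \<le> c then of_bool (1 \<le> k \<and> k \<le> c) else - of_bool (c + 1 \<le> k \<and> k \<le> 0))" for c k
  have rep: "(-1)^card {l. u$l < 0} *\<^sub>R (\<Sum>j\<in>M_range u. W j) = (\<Sum>i\<in>B. (\<Prod>l\<in>UNIV. \<rho> (u$l) (i$l)) *\<^sub>R W i)"
    if u: "\<And>l. t$l - 1 \<le> u$l \<and> u$l \<le> t$l" for u
  proof -
    have sub: "M_range u \<subseteq> B"
    proof
      fix j assume "j \<in> M_range u"
      then have jr: "(0 \<le> u$l \<longrightarrow> 1 \<le> j$l \<and> j$l \<le> u$l) \<and> (u$l < 0 \<longrightarrow> u$l + 1 \<le> j$l \<and> j$l \<le> 0)" for l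
        by (simp add: M_range_def)
      have "lo$l \<le> j$l \<and> j$l \<le> hi$l" for l
        using u[of l] jr[of l] abs_ge_self[of "t$l"] abs_ge_minus_self[of "t$l"]
        by (simp add: lo_def hi_def) linarith
      then show "j \<in> B" by (simp add: B_def boxs_def)
    qed
    have "(-1)^card {l. u$l < 0} *\<^sub>R (\<Sum>j\<in>M_range u. W j)
        = (\<Sum>i\<in>B. ((-1)^card {l. u$l < 0} * of_bool (i \<in> M_range u)) *\<^sub>R W i)"
      unfolding sum_sub_coef[OF fB sub] by (simp add: scaleR_sum_right)
    also have "\<dots> = (\<Sum>i\<in>B. (\<Prod>l\<in>UNIV. \<rho> (u$l) (i$l)) *\<^sub>R W i)"
    proof (rule sum.cong[OF refl])
      fix i
      have "(\<Prod>l\<in>UNIV. \<rho> (u$l) (i$l)) = (\<Prod>l\<in>UNIV. (if u$l < 0 then -1 else 1) *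
          of_bool (if 0 \<le> u$l then 1 \<le> i$l \<and> i$l \<le> u$l else u$l + 1 \<le> i$l \<and> i$l \<le> 0))"
        by (intro prod.cong) (auto simp: \<rho>_def)
      also have "\<dots> = (\<Prod>l\<in>UNIV. (if u$l < 0 then -1 else 1::real)) *
          (\<Prod>l\<in>UNIV. of_bool (if 0 \<le> u$l then 1 \<le> i$l \<and> i$l \<le> u$l else u$l + 1 \<le> i$l \<and> i$l \<le> 0))"
        by (rule prod.distrib)
      also have "(\<Prod>l\<in>UNIV. (if u$l < 0 then -1 else 1::real)) = (-1)^card {l. u$l < 0}"
        by (rule prod_sign_UNIV)
      also have "(i \<in> M_range u) = (\<forall>l. if 0 \<le> u$l then 1 \<le> i$l \<and> i$l \<le> u$l else u$l + 1 \<le> i$l \<and> i$l \<le> 0)"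
      proof -
        have e: "((0 \<le> u$l \<longrightarrow> 1 \<le> i$l \<and> i$l \<le> u$l) \<and> (u$l < 0 \<longrightarrow> u$l + 1 \<le> i$l \<and> i$l \<le> 0))
          = (if 0 \<le> u$l then 1 \<le> i$l \<and> i$l \<le> u$l else u$l + 1 \<le> i$l \<and> i$l \<le> 0)" for l
          by auto
        show ?thesis unfolding M_range_def mem_Collect_eq using e by blast
      qed
      then have "(\<Prod>l\<in>UNIV. of_bool (if 0 \<le> u$l then 1 \<le> i$l \<and> i$l \<le> u$l else u$l + 1 \<le> i$l \<and> i$l \<le> 0)) = (of_bool (i \<in> M_range u) :: real)"
        unfolding prod_of_bool_UNIV by simp
      finally show "((-1)^card {l. u$l < 0} * of_bool (i \<in> M_range u)) *\<^sub>R W i = (\<Prod>l\<in>UNIV. \<rho> (u$l) (i$l)) *\<^sub>R W i"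
        by simp
    qed
    finally show ?thesis .
  qed
  have "(\<Sum>S\<in>Pow UNIV. (-1)^card S *\<^sub>R ((-1)^card {l. (t - ind_vec S)$l < 0} *\<^sub>R (\<Sum>j\<in>M_range (t - ind_vec S). W j)))
      = (\<Sum>S\<in>Pow UNIV. (-1)^card S *\<^sub>R (\<Sum>i\<in>B. (\<Prod>l\<in>UNIV. \<rho> ((t - ind_vec S)$l) (i$l)) *\<^sub>R W i))"
  proof (rule sum.cong[OF refl])
    fix S :: "'N set"
    have "\<And>l. t$l - 1 \<le> (t - ind_vec S)$l \<and> (t - ind_vec S)$l \<le> t$l" by (auto simp: ind_vec_nth)
    then have r: "(-1)^card {l. (t - ind_vec S)$l < 0} *\<^sub>R (\<Sum>j\<in>M_range (t - ind_vec S). W j)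
        = (\<Sum>i\<in>B. (\<Prod>l\<in>UNIV. \<rho> ((t - ind_vec S)$l) (i$l)) *\<^sub>R W i)"
      by (rule rep)
    show "(-1)^card S *\<^sub>R ((-1)^card {l. (t - ind_vec S)$l < 0} *\<^sub>R (\<Sum>j\<in>M_range (t - ind_vec S). W j))
        = (-1)^card S *\<^sub>R (\<Sum>i\<in>B. (\<Prod>l\<in>UNIV. \<rho> ((t - ind_vec S)$l) (i$l)) *\<^sub>R W i)"
      by (simp only: r)
  qed
  also have "\<dots> = (\<Sum>i\<in>B. (\<Sum>S\<in>Pow UNIV. (-1)^card S * (\<Prod>l\<in>UNIV. \<rho> ((t - ind_vec S)$l) (i$l))) *\<^sub>R W i)"
    by (rule swap_coef)
  also have "\<dots> = (\<Sum>i\<in>B. of_bool (i = t) *\<^sub>R W i)"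
  proof (rule sum.cong[OF refl])
    fix i
    define f where "f l \<beta> = \<rho> (t$l - (if \<beta> then 1 else 0)) (i$l)" for l \<beta>
    have e1: "(\<Prod>l\<in>UNIV. \<rho> ((t - ind_vec S)$l) (i$l)) = (\<Prod>l\<in>UNIV. f l (l \<in> S))" for S
      by (simp add: f_def ind_vec_nth)
    have e2: "f l False - f l True = of_bool (i$l = t$l)" for l
      unfolding f_def \<rho>_def by (simp only: if_True if_False diff_0_right rho_diff)
    show "(\<Sum>S\<in>Pow UNIV. (-1)^card S * (\<Prod>l\<in>UNIV. \<rho> ((t - ind_vec S)$l) (i$l))) *\<^sub>R W i = of_bool (i = t) *\<^sub>R W i"
      unfolding e1 sum_pow_prod e2 prod_of_bool_UNIV by (simp add: vec_eq_iff)
  qed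
  also have "\<dots> = W t" by (rule sum_pick[OF fB]) (auto simp: B_def boxs_def lo_def hi_def)
  finally show ?thesis .
qed

lemma delta_boxsum:
  fixes V :: "(int,'N::finite) vec \<Rightarrow> real^'n"
  shows "(\<Sum>S\<in>Pow UNIV. (-1)^card S *\<^sub>R (\<Sum>i\<in>boxs a (j - ind_vec S). V i)) = of_bool (\<forall>l. a$l \<le> j$l) *\<^sub>R V j"
proof -
  define B where "B = boxs a j"
  have fB: "finite B" by (simp add: B_def finite_boxs)
  have sub: "boxs a (j - ind_vec S) \<subseteq> B" for S
  proof
    fix i assume i: "i \<in> boxs a (j - ind_vec S)"
    have "a$l \<le> i$l \<and> i$l \<le> j$l" for l
    proof -
      have "a$l \<le> i$l" "i$l \<le> j$l - ind_vec S $ l" using i by (auto simp: boxs_def)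
      moreover have "0 \<le> ind_vec S $ l" by (simp add: ind_vec_nth)
      ultimately show ?thesis by linarith
    qed
    then show "i \<in> B" by (simp add: B_def boxs_def)
  qed
  have "(\<Sum>S\<in>Pow UNIV. (-1)^card S *\<^sub>R (\<Sum>i\<in>boxs a (j - ind_vec S). V i))
      = (\<Sum>S\<in>Pow UNIV. (-1)^card S *\<^sub>R (\<Sum>i\<in>B. of_bool (i \<in> boxs a (j - ind_vec S)) *\<^sub>R V i))"
    unfolding sum_sub_coef[OF fB sub] ..
  also have "\<dots> = (\<Sum>i\<in>B. (\<Sum>S\<in>Pow UNIV. (-1)^card S * of_bool (i \<in> boxs a (j - ind_vec S))) *\<^sub>R V i)"
    by (rule swap_coef)
  also have "\<dots> = (\<Sum>i\<in>B. of_bool (\<forall>l. a$l \<le> i$l \<and> i$l = j$l) *\<^sub>R V i)"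
  proof (rule sum.cong[OF refl])
    fix i
    define f where "f l \<beta> = (of_bool (a$l \<le> i$l \<and> i$l \<le> j$l - (if \<beta> then 1 else 0)) :: real)" for l \<beta>
    have e1: "of_bool (i \<in> boxs a (j - ind_vec S)) = (\<Prod>l\<in>UNIV. f l (l \<in> S))" for S
      unfolding f_def prod_of_bool_UNIV by (simp add: boxs_def ind_vec_nth)
    have e2: "f l False - f l True = of_bool (a$l \<le> i$l \<and> i$l = j$l)" for l
      unfolding f_def by (simp only: of_bool_def if_True if_False) (smt (verit))
    show "(\<Sum>S\<in>Pow UNIV. (-1)^card S * of_bool (i \<in> boxs a (j - ind_vec S))) *\<^sub>R V i
        = of_bool (\<forall>l. a$l \<le> i$l \<and> i$l = j$l) *\<^sub>R V i"
      unfolding e1 sum_pow_prod e2 prod_of_bool_UNIV ..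
  qed
  also have "\<dots> = of_bool (\<forall>l. a$l \<le> j$l) *\<^sub>R V j"
  proof (cases "\<forall>l. a$l \<le> j$l")
    case True
    then have "(\<Sum>i\<in>B. of_bool (\<forall>l. a$l \<le> i$l \<and> i$l = j$l) *\<^sub>R V i) = (\<Sum>i\<in>B. of_bool (i = j) *\<^sub>R V i)"
      by (intro sum.cong refl) (auto simp: vec_eq_iff)
    also have "\<dots> = V j" by (rule sum_pick[OF fB]) (use True in \<open>auto simp: B_def boxs_def\<close>)
    finally show ?thesis using True by simp
  next
    case False
    then obtain l0 where l0: "\<not> a$l0 \<le> j$l0" by blast
    have nz: "\<not> (\<forall>l. a$l \<le> i$l \<and> i$l = j$l)" for i
    proof
      assume "\<forall>l. a$l \<le> i$l \<and> i$l = j$l"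
      then have "a$l0 \<le> i$l0 \<and> i$l0 = j$l0" by (rule spec)
      with l0 show False by linarith
    qed
    have "(\<Sum>i\<in>B. of_bool (\<forall>l. a$l \<le> i$l \<and> i$l = j$l) *\<^sub>R V i) = (\<Sum>i\<in>B. 0)"
      by (intro sum.cong refl) (simp add: nz)
    then show ?thesis using False by simp
  qed
  finally show ?thesis .
qed

definition mlo :: "(int,'N::finite) vec \<Rightarrow> (int,'N) vec" where
  "mlo t = (\<chi> l. if 0 \<le> t$l then 1 else t$l + 1)"
definition mhi :: "(int,'N::finite) vec \<Rightarrow> (int,'N) vec" where
  "mhi t = (\<chi> l. if 0 \<le> t$l then t$l else 0)"

lemma M_range_boxs: "M_range t = boxs (mlo t) (mhi t)"
proof -
  have e: "((0 \<le> t$l \<longrightarrow> 1 \<le> j$l \<and> j$l \<le> t$l) \<and> (t$l < 0 \<longrightarrow> t$l + 1 \<le> j$l \<and> j$l \<le> 0))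
      = (mlo t $ l \<le> j$l \<and> j$l \<le> mhi t $ l)" for j l
    by (cases "0 \<le> t$l") (simp_all add: mlo_def mhi_def)
  show ?thesis by (simp only: M_range_def boxs_def e)
qed

lemma mlo_mhi: "\<forall>l. mlo t $ l \<le> mhi t $ l + 1"
proof
  fix l show "mlo t $ l \<le> mhi t $ l + 1" by (cases "0 \<le> t$l") (simp_all add: mlo_def mhi_def)
qed

lemma corner_neg: "corner (mlo t) (mhi t) {l. t$l < 0} = t"
  unfolding vec_eq_iff
proof
  fix l show "corner (mlo t) (mhi t) {l. t$l < 0} $ l = t $ l"
    by (cases "0 \<le> t$l") (simp_all add: corner_def mlo_def mhi_def)
qed

lemma corner_zero: "S \<noteq> {l. t$l < 0} \<Longrightarrow> \<exists>l. corner (mlo t) (mhi t) S $ l = 0"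
proof -
  assume "S \<noteq> {l. t$l < 0}"
  then obtain l where l: "(l \<in> S) \<noteq> (t$l < 0)" by blast
  have "corner (mlo t) (mhi t) S $ l = 0"
    using l by (cases "l \<in> S") (simp_all add: corner_def mlo_def mhi_def)
  then show ?thesis by blast
qed

lemma boxs_empty: "\<not> (\<forall>l. a$l \<le> b$l + 1) \<Longrightarrow> boxs a b = {}"
proof -
  assume "\<not> (\<forall>l. a$l \<le> b$l + 1)"
  then obtain l where l: "b$l + 1 < a$l" by (auto simp: not_le)
  show "boxs a b = {}"
  proof (rule equals0I)
    fix j assume "j \<in> boxs a b"
    then have "a$l \<le> j$l" "j$l \<le> b$l" by (auto simp: boxs_def)
    with l show False by linarith
  qed
qed


lemma ev_box_meas:
  fixes X :: "'i \<Rightarrow> 'a \<Rightarrow> 'b::topological_space"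
  assumes "finite T" "\<And>t. t \<in> T \<Longrightarrow> X t \<in> borel_measurable M" "\<And>t. t \<in> T \<Longrightarrow> F t \<in> sets borel"
  shows "{\<omega>\<in>space M. \<forall>t\<in>T. X t \<omega> \<in> F t} \<in> sets M"
proof -
  have m: "(\<lambda>\<omega>. restrict (\<lambda>t. X t \<omega>) T) \<in> measurable M (PiM T (\<lambda>_. borel))"
    using assms(2) by (rule measurable_restrict)
  have s: "PiE T F \<in> sets (PiM T (\<lambda>_. borel))" using assms(1,3) by (intro sets_PiM_I_finite) auto
  have "(\<lambda>\<omega>. restrict (\<lambda>t. X t \<omega>) T) -` PiE T F \<inter> space M = {\<omega>\<in>space M. \<forall>t\<in>T. X t \<omega> \<in> F t}"
    by (auto simp: PiE_iff)
  with measurable_sets[OF m s] show ?thesis by simp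
qed

lemma measure_box_distr:
  fixes X :: "'i \<Rightarrow> 'a \<Rightarrow> 'b::topological_space"
  assumes "finite T" "\<And>t. t \<in> T \<Longrightarrow> X t \<in> borel_measurable M" "\<And>t. t \<in> T \<Longrightarrow> F t \<in> sets borel"
  shows "emeasure (distr M (PiM T (\<lambda>_. borel)) (\<lambda>\<omega>. restrict (\<lambda>t. X t \<omega>) T)) {f \<in> PiE T (\<lambda>_. UNIV). \<forall>i\<in>T. f i \<in> F i}
      = emeasure M {\<omega>\<in>space M. \<forall>t\<in>T. X t \<omega> \<in> F t}"
proof -
  have m: "(\<lambda>\<omega>. restrict (\<lambda>t. X t \<omega>) T) \<in> measurable M (PiM T (\<lambda>_. borel))"
    using assms(2) by (rule measurable_restrict)
  have e: "{f \<in> PiE T (\<lambda>_. UNIV). \<forall>i\<in>T. f i \<in> F i} = PiE T F" by (auto simp: PiE_def Pi_def)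
  have s: "PiE T F \<in> sets (PiM T (\<lambda>_. borel))" using assms(1,3) by (intro sets_PiM_I_finite) auto
  have "(\<lambda>\<omega>. restrict (\<lambda>t. X t \<omega>) T) -` PiE T F \<inter> space M = {\<omega>\<in>space M. \<forall>t\<in>T. X t \<omega> \<in> F t}"
    by (auto simp: PiE_iff)
  then show ?thesis unfolding e emeasure_distr[OF m s] by simp
qed

lemma box_eq_from_distr:
  fixes X X' :: "'i \<Rightarrow> 'a \<Rightarrow> 'b::topological_space"
  assumes T: "finite T" and m1: "\<And>t. t \<in> T \<Longrightarrow> X t \<in> borel_measurable M"
    and m2: "\<And>t. t \<in> T \<Longrightarrow> X' t \<in> borel_measurable M"
    and Fb: "\<And>t. t \<in> T \<Longrightarrow> F t \<in> sets borel"
    and d: "distr M (PiM T (\<lambda>_. borel)) (\<lambda>\<omega>. restrict (\<lambda>t. X t \<omega>) T)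
          = distr M (PiM T (\<lambda>_. borel)) (\<lambda>\<omega>. restrict (\<lambda>t. X' t \<omega>) T)"
  shows "emeasure M {\<omega>\<in>space M. \<forall>t\<in>T. X t \<omega> \<in> F t} = emeasure M {\<omega>\<in>space M. \<forall>t\<in>T. X' t \<omega> \<in> F t}"
proof -
  have "emeasure (distr M (PiM T (\<lambda>_. borel)) (\<lambda>\<omega>. restrict (\<lambda>t. X t \<omega>) T)) {f \<in> PiE T (\<lambda>_. UNIV). \<forall>i\<in>T. f i \<in> F i}
      = emeasure (distr M (PiM T (\<lambda>_. borel)) (\<lambda>\<omega>. restrict (\<lambda>t. X' t \<omega>) T)) {f \<in> PiE T (\<lambda>_. UNIV). \<forall>i\<in>T. f i \<in> F i}"
    using d by simp
  then show ?thesis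
    using measure_box_distr[where T=T and X=X and M=M and F=F, OF T m1 Fb]
      measure_box_distr[where T=T and X=X' and M=M and F=F, OF T m2 Fb] by simp
qed

context prob_space
begin

lemma box_le_step:
  fixes Xs Xs' :: "nat \<Rightarrow> 'i \<Rightarrow> 'a \<Rightarrow> real^'n" and X X' :: "'i \<Rightarrow> 'a \<Rightarrow> real^'n"
  assumes T: "finite T"
    and A: "\<And>t. t \<in> T \<Longrightarrow> conv_prob M (\<lambda>m. Xs m t) (X t)"
    and B: "\<And>t. t \<in> T \<Longrightarrow> conv_prob M (\<lambda>m. Xs' m t) (X' t)"
    and L: "\<And>m. distr M (PiM T (\<lambda>_. borel)) (\<lambda>\<omega>. restrict (\<lambda>t. Xs m t \<omega>) T)
              = distr M (PiM T (\<lambda>_. borel)) (\<lambda>\<omega>. restrict (\<lambda>t. Xs' m t \<omega>) T)"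
    and F: "\<And>t. t \<in> T \<Longrightarrow> closed (F t)" and d: "d > 0"
  shows "prob {\<omega>\<in>space M. \<forall>t\<in>T. X t \<omega> \<in> F t}
       \<le> prob {\<omega>\<in>space M. \<forall>t\<in>T. infdist (X' t \<omega>) (F t) \<le> 2 * d}"
proof -
  have mX: "X t \<in> borel_measurable M" "X' t \<in> borel_measurable M"
     "Xs m t \<in> borel_measurable M" "Xs' m t \<in> borel_measurable M" if "t \<in> T" for t m
    using cp_measD[OF A[OF that]] cp_measD[OF B[OF that]] by auto
  have clo: "{v. infdist v (F t) \<le> c} \<in> sets borel" for c t
    by (intro borel_closed closed_Collect_le continuous_intros)
  have Fb: "F t \<in> sets borel" if "t \<in> T" for t using F[OF that] by (rule borel_closed)
  define bad where "bad m = (\<Sum>t\<in>T. prob {\<omega>\<in>space M. d < dist (Xs m t \<omega>) (X t \<omega>)})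
      + (\<Sum>t\<in>T. prob {\<omega>\<in>space M. d < dist (Xs' m t \<omega>) (X' t \<omega>)})" for m
  have badm: "{\<omega>\<in>space M. d < dist (Xs m t \<omega>) (X t \<omega>)} \<in> sets M"
     "{\<omega>\<in>space M. d < dist (Xs' m t \<omega>) (X' t \<omega>)} \<in> sets M" if "t \<in> T" for t m
  proof -
    note [measurable] = mX[OF that]
    show "{\<omega>\<in>space M. d < dist (Xs m t \<omega>) (X t \<omega>)} \<in> sets M" by measurable
    show "{\<omega>\<in>space M. d < dist (Xs' m t \<omega>) (X' t \<omega>)} \<in> sets M" by measurable
  qed
  have bad0: "bad \<longlonglongrightarrow> 0"
  proof -
    have "(\<lambda>m. prob {\<omega>\<in>space M. d < dist (Xs m t \<omega>) (X t \<omega>)}) \<longlonglongrightarrow> 0"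
         "(\<lambda>m. prob {\<omega>\<in>space M. d < dist (Xs' m t \<omega>) (X' t \<omega>)}) \<longlonglongrightarrow> 0" if "t \<in> T" for t
      using A[OF that] B[OF that] d unfolding conv_prob_def by auto
    then have "bad \<longlonglongrightarrow> (\<Sum>t\<in>T. 0) + (\<Sum>t\<in>T. 0)"
      unfolding bad_def by (intro tendsto_add tendsto_sum) auto
    then show ?thesis by simp
  qed
  define E0 where "E0 = {\<omega>\<in>space M. \<forall>t\<in>T. X t \<omega> \<in> F t}"
  define E2 where "E2 = {\<omega>\<in>space M. \<forall>t\<in>T. infdist (X' t \<omega>) (F t) \<le> 2 * d}"
  have E2m: "E2 \<in> sets M" unfolding E2_def
    using ev_box_meas[OF T, of X' M "\<lambda>t. {v. infdist v (F t) \<le> 2 * d}"] mX clo by simp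
  have step: "prob E0 \<le> prob E2 + bad m" for m
  proof -
    define E1 where "E1 = {\<omega>\<in>space M. \<forall>t\<in>T. infdist (Xs m t \<omega>) (F t) \<le> d}"
    define E1' where "E1' = {\<omega>\<in>space M. \<forall>t\<in>T. infdist (Xs' m t \<omega>) (F t) \<le> d}"
    define Bd where "Bd = (\<Union>t\<in>T. {\<omega>\<in>space M. d < dist (Xs m t \<omega>) (X t \<omega>)})"
    define Bd' where "Bd' = (\<Union>t\<in>T. {\<omega>\<in>space M. d < dist (Xs' m t \<omega>) (X' t \<omega>)})"
    have E1m: "E1 \<in> sets M" unfolding E1_def
      using ev_box_meas[OF T, of "Xs m" M "\<lambda>t. {v. infdist v (F t) \<le> d}"] mX clo by simp
    have E1'm: "E1' \<in> sets M" unfolding E1'_def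
      using ev_box_meas[OF T, of "Xs' m" M "\<lambda>t. {v. infdist v (F t) \<le> d}"] mX clo by simp
    have Bdm: "Bd \<in> sets M" "Bd' \<in> sets M" unfolding Bd_def Bd'_def using T badm by auto
    have pBd: "prob Bd \<le> (\<Sum>t\<in>T. prob {\<omega>\<in>space M. d < dist (Xs m t \<omega>) (X t \<omega>)})"
      unfolding Bd_def using T badm by (intro finite_measure_subadditive_finite) auto
    have pBd': "prob Bd' \<le> (\<Sum>t\<in>T. prob {\<omega>\<in>space M. d < dist (Xs' m t \<omega>) (X' t \<omega>)})"
      unfolding Bd'_def using T badm by (intro finite_measure_subadditive_finite) auto
    have "E0 \<subseteq> E1 \<union> Bd"
    proof
      fix \<omega> assume "\<omega> \<in> E0"
      then have \<omega>: "\<omega> \<in> space M" "\<And>t. t \<in> T \<Longrightarrow> X t \<omega> \<in> F t" by (auto simp: E0_def)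
      show "\<omega> \<in> E1 \<union> Bd"
      proof (cases "\<omega> \<in> Bd")
        case False
        then have dd: "dist (Xs m t \<omega>) (X t \<omega>) \<le> d" if "t \<in> T" for t using that \<omega> by (auto simp: Bd_def not_less)
        have "infdist (Xs m t \<omega>) (F t) \<le> d" if "t \<in> T" for t
          using infdist_le[OF \<omega>(2)[OF that], of "Xs m t \<omega>"] dd[OF that] by linarith
        then show ?thesis using \<omega> by (auto simp: E1_def)
      qed simp
    qed
    then have "prob E0 \<le> prob (E1 \<union> Bd)" using E1m Bdm by (intro finite_measure_mono) auto
    also have "\<dots> \<le> prob E1 + prob Bd" using E1m Bdm by (intro prob_union_le) auto
    also have "prob E1 = prob E1'"
    proof -
      have "emeasure M E1 = emeasure M E1'"
        unfolding E1_def E1'_def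
        by (rule box_eq_from_distr[where F="\<lambda>t. {v. infdist v (F t) \<le> d}", simplified, OF T _ _ _ L[of m]])
           (auto intro: mX clo)
      then show ?thesis by (simp add: emeasure_eq_measure)
    qed
    also have "E1' \<subseteq> E2 \<union> Bd'"
    proof
      fix \<omega> assume "\<omega> \<in> E1'"
      then have \<omega>: "\<omega> \<in> space M" "\<And>t. t \<in> T \<Longrightarrow> infdist (Xs' m t \<omega>) (F t) \<le> d" by (auto simp: E1'_def)
      show "\<omega> \<in> E2 \<union> Bd'"
      proof (cases "\<omega> \<in> Bd'")
        case False
        then have dd: "dist (Xs' m t \<omega>) (X' t \<omega>) \<le> d" if "t \<in> T" for t using that \<omega> by (auto simp: Bd'_def not_less)
        have "infdist (X' t \<omega>) (F t) \<le> 2 * d" if "t \<in> T" for t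
          using infdist_triangle[of "X' t \<omega>" "F t" "Xs' m t \<omega>"] \<omega>(2)[OF that] dd[OF that]
            dist_commute[of "X' t \<omega>" "Xs' m t \<omega>"] by linarith
        then show ?thesis using \<omega> by (auto simp: E2_def)
      qed simp
    qed
    then have "prob E1' \<le> prob (E2 \<union> Bd')" using E2m Bdm by (intro finite_measure_mono) auto
    also have "\<dots> \<le> prob E2 + prob Bd'" using E2m Bdm by (intro prob_union_le) auto
    finally have "prob E0 \<le> prob E2 + prob Bd' + prob Bd" by simp
    then show ?thesis using pBd pBd' by (simp add: bad_def)
  qed
  have "prob E0 \<le> prob E2"
  proof (rule LIMSEQ_le_const)
    show "(\<lambda>m. prob E2 + bad m) \<longlonglongrightarrow> prob E2"
      using tendsto_add[OF tendsto_const bad0, of "prob E2"] by simp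
    show "\<exists>N. \<forall>m\<ge>N. prob E0 \<le> prob E2 + bad m"
      using step by auto
  qed
  then show ?thesis by (simp add: E0_def E2_def)
qed

lemma box_le:
  fixes Xs Xs' :: "nat \<Rightarrow> 'i \<Rightarrow> 'a \<Rightarrow> real^'n" and X X' :: "'i \<Rightarrow> 'a \<Rightarrow> real^'n"
  assumes T: "finite T"
    and A: "\<And>t. t \<in> T \<Longrightarrow> conv_prob M (\<lambda>m. Xs m t) (X t)"
    and B: "\<And>t. t \<in> T \<Longrightarrow> conv_prob M (\<lambda>m. Xs' m t) (X' t)"
    and L: "\<And>m. distr M (PiM T (\<lambda>_. borel)) (\<lambda>\<omega>. restrict (\<lambda>t. Xs m t \<omega>) T)
              = distr M (PiM T (\<lambda>_. borel)) (\<lambda>\<omega>. restrict (\<lambda>t. Xs' m t \<omega>) T)"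
    and F: "\<And>t. t \<in> T \<Longrightarrow> closed (F t)"
  shows "prob {\<omega>\<in>space M. \<forall>t\<in>T. X t \<omega> \<in> F t} \<le> prob {\<omega>\<in>space M. \<forall>t\<in>T. X' t \<omega> \<in> F t}"
proof (cases "\<exists>t\<in>T. F t = {}")
  case True
  then have e: "{\<omega>\<in>space M. \<forall>t\<in>T. X t \<omega> \<in> F t} = {}" by auto
  show ?thesis unfolding e using measure_nonneg[of M "{\<omega>\<in>space M. \<forall>t\<in>T. X' t \<omega> \<in> F t}"] by simp
next
  case False
  have mX: "X' t \<in> borel_measurable M" if "t \<in> T" for t using cp_measD[OF B[OF that]] by auto
  have clo: "{v. infdist v (F t) \<le> c} \<in> sets borel" for c t
    by (intro borel_closed closed_Collect_le continuous_intros)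
  define G where "G k = {\<omega>\<in>space M. \<forall>t\<in>T. infdist (X' t \<omega>) (F t) \<le> 2 * (1 / Suc k)}" for k :: nat
  have Gm: "G k \<in> sets M" for k unfolding G_def
    using ev_box_meas[OF T, of X' M "\<lambda>t. {v. infdist v (F t) \<le> 2 * (1 / Suc k)}"] mX clo by simp
  have "decseq G"
  proof (rule decseq_SucI)
    fix k
    have "2 * (1 / real (Suc (Suc k))) \<le> 2 * (1 / real (Suc k))" by (simp add: frac_le)
    then show "G (Suc k) \<subseteq> G k" unfolding G_def by (auto intro: order_trans)
  qed
  moreover have "(\<Inter>k. G k) = {\<omega>\<in>space M. \<forall>t\<in>T. X' t \<omega> \<in> F t}"
  proof safe
    fix \<omega> t assume h: "\<omega> \<in> (\<Inter>k. G k)" "t \<in> T"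
    have le: "infdist (X' t \<omega>) (F t) \<le> 2 * (1 / Suc k)" for k using h by (auto simp: G_def)
    have "infdist (X' t \<omega>) (F t) = 0"
    proof (rule ccontr)
      assume "infdist (X' t \<omega>) (F t) \<noteq> 0"
      then have "0 < infdist (X' t \<omega>) (F t) / 2" using infdist_nonneg[of "X' t \<omega>" "F t"] by simp
      then obtain k where "inverse (real (Suc k)) < infdist (X' t \<omega>) (F t) / 2" using reals_Archimedean by blast
      with le[of k] show False by (simp add: inverse_eq_divide)
    qed
    moreover have "F t \<noteq> {}" using False h(2) by auto
    ultimately have "X' t \<omega> \<in> closure (F t)" using in_closure_iff_infdist_zero by blast
    then show "X' t \<omega> \<in> F t" using F[OF h(2)] by (simp add: closure_closed)
  next
    fix \<omega> assume "\<omega> \<in> (\<Inter>k. G k)"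
    then show "\<omega> \<in> space M" by (auto simp: G_def)
  next
    fix \<omega> k assume "\<omega> \<in> space M" "\<forall>t\<in>T. X' t \<omega> \<in> F t"
    then show "\<omega> \<in> G k" by (auto simp: G_def infdist_zero)
  qed
  ultimately have lim: "(\<lambda>k. prob (G k)) \<longlonglongrightarrow> prob {\<omega>\<in>space M. \<forall>t\<in>T. X' t \<omega> \<in> F t}"
    using finite_Lim_measure_decseq[of G] Gm by auto
  show ?thesis
  proof (rule LIMSEQ_le_const[OF lim])
    show "\<exists>N. \<forall>k\<ge>N. prob {\<omega>\<in>space M. \<forall>t\<in>T. X t \<omega> \<in> F t} \<le> prob (G k)"
    proof (intro exI allI impI)
      fix k :: nat
      have "prob {\<omega>\<in>space M. \<forall>t\<in>T. X t \<omega> \<in> F t}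
          \<le> prob {\<omega>\<in>space M. \<forall>t\<in>T. infdist (X' t \<omega>) (F t) \<le> 2 * (1 / real (Suc k))}"
        by (rule box_le_step[OF T A B L F]) (auto intro: divide_pos_pos)
      then show "prob {\<omega>\<in>space M. \<forall>t\<in>T. X t \<omega> \<in> F t} \<le> prob (G k)" by (simp add: G_def)
    qed
  qed
qed

lemma law_limit:
  fixes Xs Xs' :: "nat \<Rightarrow> 'i \<Rightarrow> 'a \<Rightarrow> real^'n" and X X' :: "'i \<Rightarrow> 'a \<Rightarrow> real^'n"
  assumes T: "finite T"
    and A: "\<And>t. t \<in> T \<Longrightarrow> conv_prob M (\<lambda>m. Xs m t) (X t)"
    and B: "\<And>t. t \<in> T \<Longrightarrow> conv_prob M (\<lambda>m. Xs' m t) (X' t)"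
    and L: "\<And>m. distr M (PiM T (\<lambda>_. borel)) (\<lambda>\<omega>. restrict (\<lambda>t. Xs m t \<omega>) T)
              = distr M (PiM T (\<lambda>_. borel)) (\<lambda>\<omega>. restrict (\<lambda>t. Xs' m t \<omega>) T)"
  shows "distr M (PiM T (\<lambda>_. borel)) (\<lambda>\<omega>. restrict (\<lambda>t. X t \<omega>) T)
       = distr M (PiM T (\<lambda>_. borel)) (\<lambda>\<omega>. restrict (\<lambda>t. X' t \<omega>) T)"
proof -
  have mX: "X t \<in> borel_measurable M" "X' t \<in> borel_measurable M" if "t \<in> T" for t
    using cp_measD[OF A[OF that]] cp_measD[OF B[OF that]] by auto
  define \<Omega> where "\<Omega> = PiE T (\<lambda>_::'i. UNIV :: (real^'n) set)"
  define P where "P = {{f \<in> PiE T (\<lambda>_::'i. UNIV :: (real^'n) set). \<forall>i\<in>j. f i \<in> C i} | C j. j \<in> {T} \<and> C \<in> Pi j (\<lambda>_. Collect closed)}"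
  have P_alt: "P = {{f \<in> \<Omega>. \<forall>i\<in>T. f i \<in> C i} | C. C \<in> Pi T (\<lambda>_. Collect closed)}"
    unfolding P_def \<Omega>_def by auto
  have sP: "sets (PiM T (\<lambda>_. sigma UNIV (Collect closed) :: (real^'n) measure)) = sets (sigma \<Omega> P)"
    unfolding P_def \<Omega>_def
    by (rule sets_PiM_sigma[where J="{T}"]) (auto intro!: exI[of _ "{UNIV}"] simp: T)
  have PP: "P \<subseteq> Pow \<Omega>" unfolding P_alt by auto
  have sP': "sets (PiM T (\<lambda>_. borel :: (real^'n) measure)) = sigma_sets \<Omega> P"
    using sP PP by (simp add: borel_eq_closed[symmetric] sets_measure_of)
  have eqP: "emeasure (distr M (PiM T (\<lambda>_. borel)) (\<lambda>\<omega>. restrict (\<lambda>t. X t \<omega>) T)) S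
      = emeasure (distr M (PiM T (\<lambda>_. borel)) (\<lambda>\<omega>. restrict (\<lambda>t. X' t \<omega>) T)) S" if "S \<in> P" for S
  proof -
    from that obtain C where C: "C \<in> Pi T (\<lambda>_. Collect closed)" and S: "S = {f \<in> \<Omega>. \<forall>i\<in>T. f i \<in> C i}"
      unfolding P_alt by auto
    have Cc: "closed (C t)" if "t \<in> T" for t using C that by auto
    have Cb: "C t \<in> sets borel" if "t \<in> T" for t using Cc[OF that] by (rule borel_closed)
    have "prob {\<omega>\<in>space M. \<forall>t\<in>T. X t \<omega> \<in> C t} = prob {\<omega>\<in>space M. \<forall>t\<in>T. X' t \<omega> \<in> C t}"
      using box_le[OF T A B L Cc] box_le[OF T B A L[symmetric] Cc] by (intro antisym)
    then have "emeasure M {\<omega>\<in>space M. \<forall>t\<in>T. X t \<omega> \<in> C t} = emeasure M {\<omega>\<in>space M. \<forall>t\<in>T. X' t \<omega> \<in> C t}"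
      by (simp add: emeasure_eq_measure)
    then show ?thesis
      using measure_box_distr[where T=T and X=X and M=M and F=C, OF T mX(1) Cb]
        measure_box_distr[where T=T and X=X' and M=M and F=C, OF T mX(2) Cb]
      by (simp add: S \<Omega>_def)
  qed
  show ?thesis
  proof (rule measure_eqI_generator_eq[OF _ PP eqP, where A="\<lambda>_. \<Omega>"])
    show "Int_stable P"
      unfolding Int_stable_def P_alt
    proof safe
      fix C D :: "'i \<Rightarrow> (real^'n) set"
      assume "C \<in> Pi T (\<lambda>_. Collect closed)" "D \<in> Pi T (\<lambda>_. Collect closed)"
      then show "\<exists>E. {f \<in> \<Omega>. \<forall>i\<in>T. f i \<in> C i} \<inter> {f \<in> \<Omega>. \<forall>i\<in>T. f i \<in> D i} = {f \<in> \<Omega>. \<forall>i\<in>T. f i \<in> E i}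
          \<and> E \<in> Pi T (\<lambda>_. Collect closed)"
        by (intro exI[of _ "\<lambda>i. C i \<inter> D i"]) auto
    qed
    show "sets (distr M (PiM T (\<lambda>_. borel)) (\<lambda>\<omega>. restrict (\<lambda>t. X t \<omega>) T)) = sigma_sets \<Omega> P"
      using sP' by simp
    show "sets (distr M (PiM T (\<lambda>_. borel)) (\<lambda>\<omega>. restrict (\<lambda>t. X' t \<omega>) T)) = sigma_sets \<Omega> P"
      using sP' by simp
    have "\<Omega> \<in> P" unfolding P_alt by (auto intro!: exI[of _ "\<lambda>_. UNIV"])
    then show "range (\<lambda>_. \<Omega>) \<subseteq> P" by auto
    show "(\<Union>i. \<Omega>) = \<Omega>" by simp
    show "emeasure (distr M (PiM T (\<lambda>_. borel)) (\<lambda>\<omega>. restrict (\<lambda>t. X t \<omega>) T)) \<Omega> \<noteq> \<infinity>"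
    proof -
      have "prob_space (distr M (PiM T (\<lambda>_. borel)) (\<lambda>\<omega>. restrict (\<lambda>t. X t \<omega>) T))"
        by (intro prob_space_distr measurable_restrict mX)
      from finite_measure.emeasure_finite[OF prob_space.finite_measure[OF this]] show ?thesis by simp
    qed
  qed
qed

end


lemma vupd_nth: "vupd a l c $ k = (if k = l then c else a $ k)" by (simp add: vupd_def)

context prob_space
begin

lemma iter_lim_meas: "iter_lim M ls F a X \<Longrightarrow> ls \<noteq> [] \<Longrightarrow> X \<in> borel_measurable M"
  by (cases ls) (auto dest: cp_measD)

lemma iter_lim_unique:
  "iter_lim M ls F a X \<Longrightarrow> iter_lim M ls F a X' \<Longrightarrow> AE \<omega> in M. X \<omega> = X' \<omega>"
proof (induct ls arbitrary: a X X')
  case Nil then show ?case by simp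
next
  case (Cons l ls)
  from Cons.prems obtain Xs Xs' where A: "\<And>m. iter_lim M ls F (vupd a l (- int m)) (Xs m)" "conv_prob M Xs X"
     and B: "\<And>m. iter_lim M ls F (vupd a l (- int m)) (Xs' m)" "conv_prob M Xs' X'" by auto
  have ae: "AE \<omega> in M. Xs' m \<omega> = Xs m \<omega>" for m using Cons.hyps[OF B(1) A(1)] .
  have "conv_prob M Xs' X"
    by (rule cp_transform[OF A(2)]) (use ae cp_measD[OF B(2)] cp_measD[OF A(2)] in auto)
  from cp_unique[OF this B(2)] show ?case .
qed

lemma iter_lim_sum:
  assumes I: "finite I"
  shows "(\<forall>i\<in>I. iter_lim M ls (F i) a (X i)) \<Longrightarrow> iter_lim M ls (\<lambda>a \<omega>. \<Sum>i\<in>I. F i a \<omega>) a (\<lambda>\<omega>. \<Sum>i\<in>I. X i \<omega>)"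
proof (induct ls arbitrary: a X)
  case Nil then show ?case by (simp add: fun_eq_iff)
next
  case (Cons l ls)
  from Cons.prems have "\<forall>i\<in>I. \<exists>Xs. (\<forall>m. iter_lim M ls (F i) (vupd a l (- int m)) (Xs m)) \<and> conv_prob M Xs (X i)"
    by simp
  then obtain Xs where Xs: "\<And>i. i \<in> I \<Longrightarrow> (\<forall>m. iter_lim M ls (F i) (vupd a l (- int m)) (Xs i m)) \<and> conv_prob M (Xs i) (X i)"
    by metis
  show ?case
    unfolding iter_lim.simps
  proof (intro exI conjI allI)
    fix m
    show "iter_lim M ls (\<lambda>a \<omega>. \<Sum>i\<in>I. F i a \<omega>) (vupd a l (- int m)) (\<lambda>\<omega>. \<Sum>i\<in>I. Xs i m \<omega>)"
      using Xs by (intro Cons.hyps) auto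
    show "conv_prob M (\<lambda>m \<omega>. \<Sum>i\<in>I. Xs i m \<omega>) (\<lambda>\<omega>. \<Sum>i\<in>I. X i \<omega>)"
      using Xs by (intro cp_sum[OF I]) auto
  qed
qed

lemma iter_lim_bl:
  assumes f: "bounded_linear f"
  shows "iter_lim M ls F a X \<Longrightarrow> iter_lim M ls (\<lambda>a \<omega>. f (F a \<omega>)) a (\<lambda>\<omega>. f (X \<omega>))"
proof (induct ls arbitrary: a X)
  case Nil then show ?case by simp
next
  case (Cons l ls)
  from Cons.prems obtain Xs where A: "\<And>m. iter_lim M ls F (vupd a l (- int m)) (Xs m)" "conv_prob M Xs X" by auto
  show ?case
    unfolding iter_lim.simps
    by (intro exI[of _ "\<lambda>m \<omega>. f (Xs m \<omega>)"] conjI allI Cons.hyps A cp_bl[OF f A(2)])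
qed

lemma iter_lim_overwrite:
  "iter_lim M ls F a X \<Longrightarrow> (\<forall>l. l \<notin> set ls \<longrightarrow> a$l = b$l) \<Longrightarrow> iter_lim M ls F b X"
proof (induct ls arbitrary: a b X)
  case Nil
  then have "a = b" by (simp add: vec_eq_iff)
  with Nil show ?case by simp
next
  case (Cons l ls)
  from Cons.prems obtain Xs where A: "\<And>m. iter_lim M ls F (vupd a l (- int m)) (Xs m)" "conv_prob M Xs X" by auto
  have "iter_lim M ls F (vupd b l (- int m)) (Xs m)" for m
    by (rule Cons.hyps[OF A(1)]) (use Cons.prems in \<open>auto simp: vupd_nth\<close>)
  with A(2) show ?case by auto
qed

lemma iter_lim_shift:
  "iter_lim M ls F (a + s) X \<Longrightarrow> (\<forall>l\<in>set ls. s$l \<le> 0) \<Longrightarrow> iter_lim M ls (\<lambda>b. F (b + s)) a X"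
proof (induct ls arbitrary: a X)
  case Nil then show ?case by simp
next
  case (Cons l ls)
  from Cons.prems obtain Xs where A: "\<And>m. iter_lim M ls F (vupd (a + s) l (- int m)) (Xs m)" "conv_prob M Xs X" by auto
  define k where "k = nat (- s$l)"
  have sl: "s$l \<le> 0" using Cons.prems by auto
  have e: "vupd a l (- int m) + s = vupd (a + s) l (- int (m + k))" for m
    using sl by (auto simp: vec_eq_iff vupd_nth k_def)
  have "iter_lim M ls (\<lambda>b. F (b + s)) (vupd a l (- int m)) (Xs (m + k))" for m
    by (rule Cons.hyps) (use A(1)[of "m + k"] e Cons.prems in auto)
  then show ?case
    unfolding iter_lim.simps by (intro exI[of _ "\<lambda>m. Xs (m + k)"] conjI allI cp_shift[OF A(2)])
qed

lemma iter_law: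
  fixes F F' :: "'t \<Rightarrow> (int,'N::finite) vec \<Rightarrow> 'a \<Rightarrow> real^'n"
  assumes T: "finite T"
    and L: "\<And>a. distr M (PiM T (\<lambda>_. borel)) (\<lambda>\<omega>. restrict (\<lambda>t. F t a \<omega>) T)
            = distr M (PiM T (\<lambda>_. borel)) (\<lambda>\<omega>. restrict (\<lambda>t. F' t a \<omega>) T)"
  shows "(\<forall>t\<in>T. iter_lim M ls (F t) a (X t)) \<Longrightarrow> (\<forall>t\<in>T. iter_lim M ls (F' t) a (X' t)) \<Longrightarrow>
     distr M (PiM T (\<lambda>_. borel)) (\<lambda>\<omega>. restrict (\<lambda>t. X t \<omega>) T)
   = distr M (PiM T (\<lambda>_. borel)) (\<lambda>\<omega>. restrict (\<lambda>t. X' t \<omega>) T)"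
proof (induct ls arbitrary: a X X')
  case Nil
  then have e1: "(\<lambda>\<omega>. restrict (\<lambda>t. X t \<omega>) T) = (\<lambda>\<omega>. restrict (\<lambda>t. F t a \<omega>) T)"
    and e2: "(\<lambda>\<omega>. restrict (\<lambda>t. X' t \<omega>) T) = (\<lambda>\<omega>. restrict (\<lambda>t. F' t a \<omega>) T)"
    by (auto simp: restrict_def fun_eq_iff)
  show ?case unfolding e1 e2 by (rule L)
next
  case (Cons l ls)
  from Cons.prems(1) have "\<forall>t\<in>T. \<exists>Xs. (\<forall>m. iter_lim M ls (F t) (vupd a l (- int m)) (Xs m)) \<and> conv_prob M Xs (X t)"
    by simp
  then obtain Xs where Xs: "\<And>t. t \<in> T \<Longrightarrow> (\<forall>m. iter_lim M ls (F t) (vupd a l (- int m)) (Xs t m)) \<and> conv_prob M (Xs t) (X t)"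
    by metis
  from Cons.prems(2) have "\<forall>t\<in>T. \<exists>Xs. (\<forall>m. iter_lim M ls (F' t) (vupd a l (- int m)) (Xs m)) \<and> conv_prob M Xs (X' t)"
    by simp
  then obtain Xs' where Xs': "\<And>t. t \<in> T \<Longrightarrow> (\<forall>m. iter_lim M ls (F' t) (vupd a l (- int m)) (Xs' t m)) \<and> conv_prob M (Xs' t) (X' t)"
    by metis
  show ?case
  proof (rule law_limit[OF T, of "\<lambda>m t. Xs t m" X "\<lambda>m t. Xs' t m" X'])
    show "conv_prob M (\<lambda>m. Xs t m) (X t)" if "t \<in> T" for t using Xs[OF that] by simp
    show "conv_prob M (\<lambda>m. Xs' t m) (X' t)" if "t \<in> T" for t using Xs'[OF that] by simp
    show "distr M (PiM T (\<lambda>_. borel)) (\<lambda>\<omega>. restrict (\<lambda>t. Xs t m \<omega>) T)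
        = distr M (PiM T (\<lambda>_. borel)) (\<lambda>\<omega>. restrict (\<lambda>t. Xs' t m \<omega>) T)" for m
      by (rule Cons.hyps) (use Xs Xs' in auto)
  qed
qed

end


lemma mv_meas: "f \<in> borel_measurable M \<Longrightarrow> (\<lambda>\<omega>. (C::real^'n^'m) *v f \<omega>) \<in> borel_measurable M"
  by (rule measurable_compose[OF _ borel_measurable_continuous_onI[OF matrix_vector_mult_linear_continuous_on]])

lemma delta_meas:
  assumes "\<And>t. Z t \<in> borel_measurable M"
  shows "delta Z t \<in> borel_measurable M"
  unfolding delta_def by (intro borel_measurable_sum borel_measurable_scaleR borel_measurable_const assms)

lemma mv_sum: "(C::real^'n^'m) *v (\<Sum>i\<in>I. f i) = (\<Sum>i\<in>I. C *v f i)"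
  by (induct I rule: infinite_finite_induct) (simp_all add: matrix_vector_right_distrib)

lemma mat_exp_cancel1: "mat_exp (tstar j \<Theta>) *v (mat_exp (- tstar j \<Theta>) *v v) = v"
proof -
  have "mat_exp (- (- tstar j \<Theta>)) ** mat_exp (- tstar j \<Theta>) = mat 1" by (rule mat_exp_neg)
  then show ?thesis by (simp add: matrix_vector_mul_assoc)
qed

lemma mat_exp_cancel2: "mat_exp (- tstar j \<Theta>) *v (mat_exp (tstar j \<Theta>) *v v) = v"
  by (simp add: matrix_vector_mul_assoc mat_exp_neg)

lemma delta_Mop: "delta (M_op \<Theta> Y) t \<omega> = mat_exp (- tstar t \<Theta>) *v delta Y t \<omega>"
  unfolding delta_def[of "M_op \<Theta> Y"] M_op_def
  by (rule delta_P[where W="\<lambda>j. mat_exp (- tstar j \<Theta>) *v delta Y j \<omega>"])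

lemma boxsum_Mop:
  "box_sum \<Theta> (M_op \<Theta> Y) t a \<omega>
    = of_bool (\<forall>l. a$l \<le> t$l + 1) *\<^sub>R (\<Sum>S\<in>Pow UNIV. (-1)^card S *\<^sub>R Y (corner a t S) \<omega>)"
proof -
  have "box_sum \<Theta> (M_op \<Theta> Y) t a \<omega> = (\<Sum>j\<in>boxs a t. delta Y j \<omega>)"
    unfolding box_sum_boxs delta_Mop mat_exp_cancel1 ..
  also have "\<dots> = of_bool (\<forall>l. a$l \<le> t$l + 1) *\<^sub>R (\<Sum>S\<in>Pow UNIV. (-1)^card S *\<^sub>R Y (corner a t S) \<omega>)"
  proof (cases "\<forall>l. a$l \<le> t$l + 1")
    case True then show ?thesis by (simp add: box_telescope)
  next
    case False then show ?thesis by (simp add: boxs_empty)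
  qed
  finally show ?thesis .
qed

lemma Mop_zero: "\<exists>l. t$l = 0 \<Longrightarrow> M_op \<Theta> Y t \<omega> = 0"
proof -
  assume "\<exists>l. t$l = 0"
  then obtain l where l: "t$l = 0" by blast
  have "M_range t = {}"
  proof (rule equals0I)
    fix j assume "j \<in> M_range t"
    then have "1 \<le> j$l" "j$l \<le> t$l" using l by (auto simp: M_range_def)
    with l show False by simp
  qed
  then show ?thesis by (simp add: M_op_def)
qed

lemma Mop_meas:
  assumes "\<And>t. Y t \<in> borel_measurable M"
  shows "M_op \<Theta> Y t \<in> borel_measurable M"
  unfolding M_op_def
  by (intro borel_measurable_sum borel_measurable_scaleR borel_measurable_const mv_meas delta_meas assms)

lemma set_coords: "set (coords :: 'N::{finite,linorder} list) = UNIV"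
  by (simp add: coords_def)

lemma distinct_coords: "distinct (coords :: 'N::{finite,linorder} list)"
  by (simp add: coords_def)

lemma coords_ne: "(coords :: 'N::{finite,linorder} list) \<noteq> []"
  using set_coords[where 'N='N] by auto

lemma tstar_single: "tstar (vupd 0 l c) \<Theta> = of_int c *\<^sub>R \<Theta> l"
proof -
  have "tstar (vupd 0 l c) \<Theta> = (\<Sum>k\<in>UNIV. (if k = l then of_int c *\<^sub>R \<Theta> l else 0))"
    unfolding tstar_def by (intro sum.cong refl) (auto simp: vupd_nth)
  then show ?thesis by simp
qed

context prob_space
begin

lemma ss_meas: "self_similar M \<Theta> Y \<Longrightarrow> Y t \<in> borel_measurable M"
  by (simp add: self_similar_def random_field_def)

lemma ss_decay:
  assumes ss: "self_similar M \<Theta> Y" and pd: "pos_def_mat (\<Theta> l)"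
  shows "conv_prob M (\<lambda>m. Y (vupd p l (- int m - 1))) (\<lambda>\<omega>. 0)"
proof -
  have Ym[measurable]: "\<And>t. Y t \<in> borel_measurable M" using ss by (simp add: ss_meas)
  obtain q where q: "q \<ge> 0" "q < 1" "\<And>(m::nat) x. norm (mat_exp (- (real m *\<^sub>R \<Theta> l)) *v x) \<le> q ^ m * norm x"
    using mat_exp_decay[OF pd] by blast
  define p0 where "p0 = vupd p l 0"
  define s where "s m = vupd 0 l (- int m - 1)" for m :: nat
  have ps: "vupd p l (- int m - 1) = p0 + s m" for m
    by (auto simp: vec_eq_iff vupd_nth p0_def s_def)
  have ts: "tstar (s m) \<Theta> = - (real (Suc m) *\<^sub>R \<Theta> l)" for m
    unfolding s_def tstar_single by (simp add: algebra_simps)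
  show ?thesis
  proof (rule cp_zero_bound[where c="\<lambda>m. q ^ Suc m" and Z="Y p0"])
    show "(\<lambda>m. q ^ Suc m) \<longlonglongrightarrow> 0"
      using LIMSEQ_Suc[OF LIMSEQ_power_zero[of q]] q by simp
    show "0 \<le> q ^ Suc m" for m using q by simp
    fix m :: nat and e :: real
    have law: "eq_law M (\<lambda>t. Y (t + s m)) (\<lambda>t \<omega>. mat_exp (tstar (s m) \<Theta>) *v Y t \<omega>)"
      using ss by (simp add: self_similar_def)
    have "emeasure M {\<omega>\<in>space M. Y (p0 + s m) \<omega> \<in> {v. e < norm v}}
        = emeasure M {\<omega>\<in>space M. mat_exp (tstar (s m) \<Theta>) *v Y p0 \<omega> \<in> {v. e < norm v}}"
      by (rule eq_law_emeasure[OF _ _ law, where t=p0 and A="{v. e < norm v}"]) (auto intro: mv_meas)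
    then have "prob {\<omega>\<in>space M. e < norm (Y (vupd p l (- int m - 1)) \<omega>)}
        = prob {\<omega>\<in>space M. e < norm (mat_exp (tstar (s m) \<Theta>) *v Y p0 \<omega>)}"
      by (simp add: measure_def ps)
    also have "\<dots> \<le> prob {\<omega>\<in>space M. e < q ^ Suc m * norm (Y p0 \<omega>)}"
    proof (rule finite_measure_mono)
      show "{\<omega>\<in>space M. e < norm (mat_exp (tstar (s m) \<Theta>) *v Y p0 \<omega>)} \<subseteq> {\<omega>\<in>space M. e < q ^ Suc m * norm (Y p0 \<omega>)}"
        using q(3)[of "Suc m"] by (auto simp: ts intro: less_le_trans)
    qed measurable
    finally show "prob {\<omega>\<in>space M. e < norm (Y (vupd p l (- int m - 1)) \<omega>)} \<le> prob {\<omega>\<in>space M. e < q ^ Suc m * norm (Y p0 \<omega>)}" .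
  qed (auto simp: p0_def)
qed

end


context prob_space
begin

lemma Q_lemma:
  fixes Y :: "(int,'N::{finite,linorder}) vec \<Rightarrow> 'a \<Rightarrow> real^'n" and t :: "(int,'N) vec"
  assumes ss: "self_similar M \<Theta> Y" and pd: "\<forall>l. pos_def_mat (\<Theta> l)"
  defines "Q \<equiv> \<lambda>L a \<omega>. of_bool (\<forall>k. k \<notin> L \<longrightarrow> a$k \<le> t$k + 1) *\<^sub>R (\<Sum>S\<in>Pow (UNIV - L). (-1)^card S *\<^sub>R Y (corner a t S) \<omega>)"
  shows "distinct ls \<Longrightarrow> iter_lim M ls (box_sum \<Theta> (M_op \<Theta> Y) t) a (Q (set ls) a)"
proof (induct ls arbitrary: a)
  case Nil
  show ?case by (simp add: fun_eq_iff boxsum_Mop Q_def)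
next
  case (Cons l ls)
  have Ym[measurable]: "\<And>t. Y t \<in> borel_measurable M" using ss by (simp add: ss_meas)
  have lL: "l \<notin> set ls" "distinct ls" using Cons.prems by auto
  define L where "L = set ls"
  have IH: "iter_lim M ls (box_sum \<Theta> (M_op \<Theta> Y) t) (vupd a l (- int m)) (Q L (vupd a l (- int m)))" for m
    unfolding L_def by (rule Cons.hyps[OF lL(2)])
  define c where "c = (\<forall>k. k \<notin> insert l L \<longrightarrow> a$k \<le> t$k + 1)"
  define SS where "SS = {S \<in> Pow (UNIV - L). l \<in> S}"
  define R where "R m \<omega> = (\<Sum>S\<in>SS. (-1)^card S *\<^sub>R Y (vupd (corner a t S) l (- int m - 1)) \<omega>)" for m \<omega>
  have Qm: "Q L' a' \<in> borel_measurable M" for L' a'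
    unfolding Q_def by (intro borel_measurable_sum borel_measurable_scaleR borel_measurable_const Ym)
  have decomp: "Q L (vupd a l (- int m)) \<omega> = Q (insert l L) a \<omega> + of_bool c *\<^sub>R R m \<omega>"
    if m: "- int m \<le> t$l + 1" for m \<omega>
  proof -
    have cond: "(\<forall>k. k \<notin> L \<longrightarrow> vupd a l (- int m) $ k \<le> t$k + 1) = c"
      using m lL(1) by (auto simp: c_def vupd_nth L_def)
    have P: "Pow (UNIV - L) = Pow (UNIV - insert l L) \<union> SS" by (auto simp: SS_def)
    have D: "Pow (UNIV - insert l L) \<inter> SS = {}" by (auto simp: SS_def)
    have c1: "corner (vupd a l (- int m)) t S = corner a t S" if "S \<in> Pow (UNIV - insert l L)" for S
      using that by (auto simp: vec_eq_iff corner_def vupd_nth)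
    have c2: "corner (vupd a l (- int m)) t S = vupd (corner a t S) l (- int m - 1)" if "S \<in> SS" for S
      using that by (auto simp: vec_eq_iff corner_def vupd_nth SS_def)
    have "(\<Sum>S\<in>Pow (UNIV - L). (-1)^card S *\<^sub>R Y (corner (vupd a l (- int m)) t S) \<omega>)
      = (\<Sum>S\<in>Pow (UNIV - insert l L). (-1)^card S *\<^sub>R Y (corner (vupd a l (- int m)) t S) \<omega>)
        + (\<Sum>S\<in>SS. (-1)^card S *\<^sub>R Y (corner (vupd a l (- int m)) t S) \<omega>)"
      unfolding P by (rule sum.union_disjoint) (auto simp: SS_def D)
    also have "\<dots> = (\<Sum>S\<in>Pow (UNIV - insert l L). (-1)^card S *\<^sub>R Y (corner a t S) \<omega>) + R m \<omega>"
      unfolding R_def by (intro arg_cong2[where f="(+)"] sum.cong refl) (simp_all add: c1 c2)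
    finally show ?thesis
      unfolding Q_def cond by (simp add: c_def scaleR_add_right)
  qed
  have R0: "conv_prob M R (\<lambda>\<omega>. 0)"
  proof -
    have "conv_prob M (\<lambda>m \<omega>. \<Sum>S\<in>SS. (-1)^card S *\<^sub>R Y (vupd (corner a t S) l (- int m - 1)) \<omega>)
        (\<lambda>\<omega>. \<Sum>S\<in>SS. (-1)^card S *\<^sub>R (0::real^'n))"
    proof (rule cp_sum)
      show "finite SS" by (simp add: SS_def)
      fix S assume "S \<in> SS"
      show "conv_prob M (\<lambda>m \<omega>. (-1)^card S *\<^sub>R Y (vupd (corner a t S) l (- int m - 1)) \<omega>) (\<lambda>\<omega>. (-1)^card S *\<^sub>R (0::real^'n))"
        by (rule cp_bl[OF bounded_linear_scaleR_right ss_decay[OF ss pd[rule_format]]])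
    qed
    then show ?thesis by (simp add: R_def[abs_def])
  qed
  have lim: "conv_prob M (\<lambda>m \<omega>. Q (insert l L) a \<omega> + of_bool c *\<^sub>R R m \<omega>) (Q (insert l L) a)"
    using cp_add[OF cp_const[OF Qm] cp_bl[OF bounded_linear_scaleR_right R0, of "of_bool c"]]
    by simp
  have cv: "conv_prob M (\<lambda>m. Q L (vupd a l (- int m))) (Q (insert l L) a)"
  proof (rule cp_transform[OF lim])
    have "\<forall>\<^sub>F m in sequentially. - int m \<le> t$l + 1"
      by (rule eventually_sequentiallyI[of "nat (- t$l)"]) auto
    then show "\<forall>\<^sub>F m in sequentially. AE \<omega> in M. Q L (vupd a l (- int m)) \<omega> = Q (insert l L) a \<omega> + of_bool c *\<^sub>R R m \<omega>"
      by eventually_elim (simp add: decomp)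
  qed (auto simp: Qm)
  show ?case
    unfolding iter_lim.simps list.set(2) L_def[symmetric]
    by (intro exI[of _ "\<lambda>m. Q L (vupd a l (- int m))"] conjI allI IH cv)
qed

lemma series_Mop:
  fixes Y :: "(int,'N::{finite,linorder}) vec \<Rightarrow> 'a \<Rightarrow> real^'n"
  assumes ss: "self_similar M \<Theta> Y" and pd: "\<forall>l. pos_def_mat (\<Theta> l)"
  shows "series_lim M \<Theta> (M_op \<Theta> Y) t (Y t)"
proof -
  have "iter_lim M coords (box_sum \<Theta> (M_op \<Theta> Y) t) 0
     ((\<lambda>L a \<omega>. of_bool (\<forall>k. k \<notin> L \<longrightarrow> a$k \<le> t$k + 1) *\<^sub>R (\<Sum>S\<in>Pow (UNIV - L). (-1)^card S *\<^sub>R Y (corner a t S) \<omega>)) (set coords) 0)"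
    by (rule Q_lemma[OF ss pd distinct_coords])
  moreover have "Pow (UNIV - (UNIV::'N set)) = {{}}" by auto
  moreover have "corner 0 t {} = t" by (simp add: corner_def vec_eq_iff)
  ultimately show ?thesis unfolding series_lim_def set_coords by simp
qed

lemma iter_lim_ind:
  assumes V[measurable]: "V \<in> borel_measurable M"
  shows "iter_lim M ls (\<lambda>a \<omega>. of_bool (\<forall>l. a$l \<le> j$l) *\<^sub>R V \<omega>) a X
    \<Longrightarrow> AE \<omega> in M. X \<omega> = of_bool (\<forall>l. l \<notin> set ls \<longrightarrow> a$l \<le> j$l) *\<^sub>R V \<omega>"
proof (induct ls arbitrary: a X)
  case Nil then show ?case by simp
next
  case (Cons l ls)
  from Cons.prems obtain Xs where A: "\<And>m. iter_lim M ls (\<lambda>a \<omega>. of_bool (\<forall>l. a$l \<le> j$l) *\<^sub>R V \<omega>) (vupd a l (- int m)) (Xs m)"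
    "conv_prob M Xs X" by auto
  define Tg where "Tg \<omega> = of_bool (\<forall>k. k \<notin> set (l # ls) \<longrightarrow> a$k \<le> j$k) *\<^sub>R V \<omega>" for \<omega>
  have Tgm[measurable]: "Tg \<in> borel_measurable M" unfolding Tg_def by measurable
  have "\<forall>\<^sub>F m in sequentially. - int m \<le> j$l"
    by (rule eventually_sequentiallyI[of "nat (- j$l)"]) auto
  then have ev: "\<forall>\<^sub>F m in sequentially. AE \<omega> in M. Xs m \<omega> = Tg \<omega>"
  proof eventually_elim
    case (elim m)
    have "(\<forall>k. k \<notin> set ls \<longrightarrow> vupd a l (- int m) $ k \<le> j$k) = (\<forall>k. k \<notin> set (l # ls) \<longrightarrow> a$k \<le> j$k)"
      using elim by (auto simp: vupd_nth)
    then show ?case using Cons.hyps[OF A(1)[of m]] by (simp add: Tg_def)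
  qed
  have "conv_prob M Xs Tg"
    by (rule cp_transform[OF cp_const[OF Tgm] ev]) (auto simp: cp_measD[OF A(2)])
  from cp_unique[OF A(2) this] show ?case by (simp add: Tg_def)
qed

end


lemma E_cancel: "mat_exp (tstar s \<Theta>) *v (mat_exp (tstar (- s) \<Theta>) *v v) = v"
  using mat_exp_tstar_neg[of "- s" \<Theta>] by (simp add: matrix_vector_mul_assoc)

lemma sum_delta_mv: "(\<Sum>S\<in>Pow UNIV. (-1)^card S *\<^sub>R ((C::real^'n^'n) *v Y (u - ind_vec S) \<omega>)) = C *v delta Y u \<omega>"
  unfolding delta_def mv_sum by (simp add: matrix_vector_mult_scaleR)

context prob_space
begin

lemma Mop_stationary:
  fixes Y :: "(int,'N::{finite,linorder}) vec \<Rightarrow> 'a \<Rightarrow> real^'n"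
  assumes comm: "\<forall>i j. \<Theta> i ** \<Theta> j = \<Theta> j ** \<Theta> i" and ss: "self_similar M \<Theta> Y"
  shows "stationary_increments M (M_op \<Theta> Y)"
  unfolding stationary_increments_def
proof (intro conjI allI)
  have Ym: "\<And>t. Y t \<in> borel_measurable M" using ss by (simp add: ss_meas)
  show "random_field M (M_op \<Theta> Y)" unfolding random_field_def by (intro allI Mop_meas Ym)
  fix s :: "(int,'N) vec"
  have law: "eq_law M (\<lambda>t. Y (t + s)) (\<lambda>t \<omega>. mat_exp (tstar s \<Theta>) *v Y t \<omega>)"
    using ss by (simp add: self_similar_def)
  define K where "K u = (\<lambda>S. u - ind_vec S) ` Pow (UNIV::'N set)" for u
  define h where "h u z = mat_exp (- tstar (u + s) \<Theta>) *v (\<Sum>S\<in>Pow UNIV. (-1)^card S *\<^sub>R z (u - ind_vec S))"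
    for u and z :: "(int,'N) vec \<Rightarrow> real^'n"
  have key: "mat_exp (- tstar (u + s) \<Theta>) *v (mat_exp (tstar s \<Theta>) *v v) = mat_exp (- tstar u \<Theta>) *v v" for u v
  proof -
    have "- tstar (u + s) \<Theta> = tstar (- u + - s) \<Theta>" by (simp only: tstar_add tstar_minus minus_add_distrib)
    then have "mat_exp (- tstar (u + s) \<Theta>) = mat_exp (tstar (- u) \<Theta>) ** mat_exp (tstar (- s) \<Theta>)"
      using mat_exp_tstar_add[OF comm, of "- u" "- s"] by simp
    then have m: "mat_exp (- tstar (u + s) \<Theta>) = mat_exp (- tstar u \<Theta>) ** mat_exp (- tstar s \<Theta>)"
      by (simp add: tstar_minus)
    show ?thesis by (simp add: m matrix_vector_mul_assoc[symmetric] mat_exp_cancel2)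
  qed
  show "eq_law M (\<lambda>t. delta (M_op \<Theta> Y) (t + s)) (\<lambda>t. delta (M_op \<Theta> Y) t)"
  proof (rule eq_law_map[OF _ _ law, where K=K and h=h])
    show "Y (i + s) \<in> borel_measurable M" for i by (simp add: Ym)
    show "(\<lambda>\<omega>. mat_exp (tstar s \<Theta>) *v Y i \<omega>) \<in> borel_measurable M" for i by (intro mv_meas Ym)
    show "finite (K u)" for u by (simp add: K_def)
    show "h u \<in> borel_measurable (PiM (K u) (\<lambda>_. borel))" for u
      unfolding h_def
      by (intro mv_meas borel_measurable_sum borel_measurable_scaleR borel_measurable_const measurable_component_singleton)
         (auto simp: K_def)
    show "delta (M_op \<Theta> Y) (u + s) \<omega> = h u (restrict (\<lambda>i. Y (i + s) \<omega>) (K u))" for u \<omega>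
    proof -
      have "(\<Sum>S\<in>Pow UNIV. (-1)^card S *\<^sub>R restrict (\<lambda>i. Y (i + s) \<omega>) (K u) (u - ind_vec S))
          = (\<Sum>S\<in>Pow UNIV. (-1)^card S *\<^sub>R Y (u + s - ind_vec S) \<omega>)"
        by (intro sum.cong refl) (auto simp: K_def algebra_simps)
      then show ?thesis by (simp add: h_def delta_Mop delta_def[of Y])
    qed
    show "delta (M_op \<Theta> Y) u \<omega> = h u (restrict (\<lambda>i. mat_exp (tstar s \<Theta>) *v Y i \<omega>) (K u))" for u \<omega>
    proof -
      have "(\<Sum>S\<in>Pow UNIV. (-1)^card S *\<^sub>R restrict (\<lambda>i. mat_exp (tstar s \<Theta>) *v Y i \<omega>) (K u) (u - ind_vec S))
          = (\<Sum>S\<in>Pow UNIV. (-1)^card S *\<^sub>R (mat_exp (tstar s \<Theta>) *v Y (u - ind_vec S) \<omega>))"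
        by (intro sum.cong refl) (auto simp: K_def)
      note r = this
      show ?thesis unfolding h_def r sum_delta_mv key delta_Mop ..
    qed
  qed
qed

lemma G_iter:
  assumes GC: "G_class M \<Theta> G"
  shows "iter_lim M coords (box_sum \<Theta> G t) 0 (Minv M \<Theta> G t)"
proof -
  have "\<exists>X. series_lim M \<Theta> G t X" using GC by (simp add: G_class_def)
  then have "series_lim M \<Theta> G t (Minv M \<Theta> G t)" unfolding Minv_def by (rule someI_ex)
  then show ?thesis by (simp add: series_lim_def)
qed

lemma boxs_shift: "boxs (a + s) (t + s) = (\<lambda>j. j + s) ` boxs a t"
proof safe
  fix x assume "x \<in> boxs (a + s) (t + s)"
  then have h: "\<forall>l. a$l + s$l \<le> x$l \<and> x$l \<le> t$l + s$l" by (simp add: boxs_def)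
  have "a$l \<le> (x - s)$l \<and> (x - s)$l \<le> t$l" for l using h[rule_format, of l] by simp
  then have "x - s \<in> boxs a t" by (simp add: boxs_def)
  then show "x \<in> (\<lambda>j. j + s) ` boxs a t" by (metis (no_types, lifting) diff_add_cancel image_eqI)
qed (auto simp: boxs_def)

lemma Minv_ss:
  fixes G :: "(int,'N::{finite,linorder}) vec \<Rightarrow> 'a \<Rightarrow> real^'n"
  assumes comm: "\<forall>i j. \<Theta> i ** \<Theta> j = \<Theta> j ** \<Theta> i" and GC: "G_class M \<Theta> G"
  shows "self_similar M \<Theta> (Minv M \<Theta> G)"
proof -
  define W where "W = Minv M \<Theta> G"
  define E where "E s = mat_exp (tstar s \<Theta>)" for s
  have IL: "iter_lim M coords (box_sum \<Theta> G t) 0 (W t)" for t unfolding W_def by (rule G_iter[OF GC])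
  have Wm: "W t \<in> borel_measurable M" for t by (rule iter_lim_meas[OF IL coords_ne])
  have si: "stationary_increments M G" using GC by (simp add: G_class_def)
  have Gm: "G t \<in> borel_measurable M" for t using si by (simp add: stationary_increments_def random_field_def)
  have EW: "(\<lambda>\<omega>. E s *v W t \<omega>) \<in> borel_measurable M" for s t by (intro mv_meas Wm)
  have Eadd: "E (s + j) = E s ** E j" for s j unfolding E_def by (rule mat_exp_tstar_add[OF comm])
  have neg: "eq_law M (\<lambda>t. W (t + s)) (\<lambda>t \<omega>. E s *v W t \<omega>)" if sneg: "\<forall>l. s$l \<le> 0" for s
    unfolding eq_law_def
  proof (intro allI impI)
    fix T :: "(int,'N) vec set" assume T: "finite T"
    have law_a: "eq_law M (\<lambda>t. box_sum \<Theta> G (t + s) (a + s)) (\<lambda>t \<omega>. E s *v box_sum \<Theta> G t a \<omega>)" for a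
    proof -
      have st: "eq_law M (\<lambda>t. delta G (t + s)) (\<lambda>t. delta G t)"
        using si by (simp add: stationary_increments_def)
      show ?thesis
      proof (rule eq_law_map[OF _ _ st, where K="\<lambda>t. boxs a t" and h="\<lambda>t z. \<Sum>j\<in>boxs a t. E (j + s) *v z j"])
        show "delta G (i + s) \<in> borel_measurable M" for i by (intro delta_meas Gm)
        show "delta G i \<in> borel_measurable M" for i by (intro delta_meas Gm)
        show "finite (boxs a t)" for t by (rule finite_boxs)
        show "(\<lambda>z. \<Sum>j\<in>boxs a t. E (j + s) *v z j) \<in> borel_measurable (PiM (boxs a t) (\<lambda>_. borel))" for t
          by (intro borel_measurable_sum mv_meas measurable_component_singleton) auto
        show "box_sum \<Theta> G (t + s) (a + s) \<omega> = (\<Sum>j\<in>boxs a t. E (j + s) *v restrict (\<lambda>i. delta G (i + s) \<omega>) (boxs a t) j)" for t \<omega>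
        proof -
          have "box_sum \<Theta> G (t + s) (a + s) \<omega> = (\<Sum>j\<in>(\<lambda>j. j + s) ` boxs a t. E j *v delta G j \<omega>)"
            by (simp add: box_sum_boxs boxs_shift E_def)
          also have "\<dots> = (\<Sum>j\<in>boxs a t. E (j + s) *v delta G (j + s) \<omega>)"
            by (subst sum.reindex) (auto simp: inj_on_def)
          finally show ?thesis by simp
        qed
        show "E s *v box_sum \<Theta> G t a \<omega> = (\<Sum>j\<in>boxs a t. E (j + s) *v restrict (\<lambda>i. delta G i \<omega>) (boxs a t) j)" for t \<omega>
        proof -
          have Ej: "E (j + s) = E s ** E j" for j using Eadd[of s j] by (simp add: add.commute)
          have "E s *v box_sum \<Theta> G t a \<omega> = (\<Sum>j\<in>boxs a t. E s *v (E j *v delta G j \<omega>))"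
            by (simp add: box_sum_boxs mv_sum E_def)
          also have "\<dots> = (\<Sum>j\<in>boxs a t. E (j + s) *v delta G j \<omega>)"
            by (intro sum.cong refl) (simp add: Ej matrix_vector_mul_assoc)
          also have "\<dots> = (\<Sum>j\<in>boxs a t. E (j + s) *v restrict (\<lambda>i. delta G i \<omega>) (boxs a t) j)"
            by (intro sum.cong refl) simp
          finally show ?thesis .
        qed
      qed
    qed
    show "distr M (PiM T (\<lambda>_. borel)) (\<lambda>\<omega>. restrict (\<lambda>t. W (t + s) \<omega>) T)
        = distr M (PiM T (\<lambda>_. borel)) (\<lambda>\<omega>. restrict (\<lambda>t. E s *v W t \<omega>) T)"
    proof (rule iter_law[OF T, where F="\<lambda>t a. box_sum \<Theta> G (t + s) (a + s)" and F'="\<lambda>t a \<omega>. E s *v box_sum \<Theta> G t a \<omega>"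
          and ls=coords and a=0])
      show "distr M (PiM T (\<lambda>_. borel)) (\<lambda>\<omega>. restrict (\<lambda>t. box_sum \<Theta> G (t + s) (a + s) \<omega>) T)
          = distr M (PiM T (\<lambda>_. borel)) (\<lambda>\<omega>. restrict (\<lambda>t. E s *v box_sum \<Theta> G t a \<omega>) T)" for a
        using law_a[of a] T unfolding eq_law_def by blast
      show "\<forall>t\<in>T. iter_lim M coords (\<lambda>a. box_sum \<Theta> G (t + s) (a + s)) 0 (\<lambda>\<omega>. W (t + s) \<omega>)"
      proof
        fix t
        have "iter_lim M coords (box_sum \<Theta> G (t + s)) (0 + s) (W (t + s))"
          by (rule iter_lim_overwrite[OF IL]) (simp add: set_coords)
        from iter_lim_shift[OF this] sneg show "iter_lim M coords (\<lambda>a. box_sum \<Theta> G (t + s) (a + s)) 0 (\<lambda>\<omega>. W (t + s) \<omega>)"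
          by simp
      qed
      show "\<forall>t\<in>T. iter_lim M coords (\<lambda>a \<omega>. E s *v box_sum \<Theta> G t a \<omega>) 0 (\<lambda>\<omega>. E s *v W t \<omega>)"
        using iter_lim_bl[OF matrix_vector_mul_bounded_linear IL] by blast
    qed
  qed
  have pos: "eq_law M (\<lambda>t. W (t + s)) (\<lambda>t \<omega>. E s *v W t \<omega>)" if spos: "\<forall>l. 0 \<le> s$l" for s
  proof -
    have "\<forall>l. (- s)$l \<le> 0" using spos by simp
    from neg[OF this] have n: "eq_law M (\<lambda>t. W (t + - s)) (\<lambda>t \<omega>. E (- s) *v W t \<omega>)" .
    have "eq_law M (\<lambda>u \<omega>. E s *v W (u + s + - s) \<omega>) (\<lambda>u \<omega>. E s *v (E (- s) *v W (u + s) \<omega>))"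
      by (rule eq_law_apply[OF _ _ n, where g="\<lambda>u. u + s" and f="\<lambda>u v. E s *v v"])
         (auto intro: Wm EW borel_measurable_continuous_onI matrix_vector_mult_linear_continuous_on)
    then have "eq_law M (\<lambda>u \<omega>. E s *v W u \<omega>) (\<lambda>u. W (u + s))"
      by (simp add: E_def E_cancel)
    then show ?thesis by (rule eq_law_sym)
  qed
  have gen: "eq_law M (\<lambda>t. W (t + s)) (\<lambda>t \<omega>. E s *v W t \<omega>)" for s
  proof -
    define p :: "(int,'N) vec" where "p = (\<chi> l. max (s$l) 0)"
    define q :: "(int,'N) vec" where "q = (\<chi> l. min (s$l) 0)"
    have spq: "s = p + q" by (auto simp: vec_eq_iff p_def q_def)
    have Sq: "eq_law M (\<lambda>t. W (t + q)) (\<lambda>t \<omega>. E q *v W t \<omega>)" by (rule neg) (simp add: q_def)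
    have Sp: "eq_law M (\<lambda>t. W (t + p)) (\<lambda>t \<omega>. E p *v W t \<omega>)" by (rule pos) (simp add: p_def)
    have A1: "eq_law M (\<lambda>u \<omega>. W (u + p + q) \<omega>) (\<lambda>u \<omega>. E q *v W (u + p) \<omega>)"
      using eq_law_apply[OF _ _ Sq, where g="\<lambda>u. u + p" and f="\<lambda>u v. v"] Wm EW by simp
    have A2: "eq_law M (\<lambda>u \<omega>. E q *v W (u + p) \<omega>) (\<lambda>u \<omega>. E q *v (E p *v W u \<omega>))"
      by (rule eq_law_apply[OF _ _ Sp, where g="\<lambda>u. u" and f="\<lambda>u v. E q *v v", simplified])
         (auto intro: Wm EW borel_measurable_continuous_onI matrix_vector_mult_linear_continuous_on)
    have "E q ** E p = E s" using Eadd[of q p] spq by (simp add: add.commute)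
    then have "(\<lambda>u \<omega>. E q *v (E p *v W u \<omega>)) = (\<lambda>u \<omega>. E s *v W u \<omega>)"
      by (simp add: matrix_vector_mul_assoc)
    moreover have "(\<lambda>u \<omega>. W (u + p + q) \<omega>) = (\<lambda>u. W (u + s))" by (simp add: spq add.assoc)
    ultimately show ?thesis using eq_law_trans[OF A1 A2] by simp
  qed
  show ?thesis
    unfolding self_similar_def random_field_def
    using gen Wm by (simp add: W_def E_def)
qed

end


context prob_space
begin

lemma Mop_Minv:
  fixes G :: "(int,'N::{finite,linorder}) vec \<Rightarrow> 'a \<Rightarrow> real^'n"
  assumes G0: "G_class0 M \<Theta> G"
  shows "AE \<omega> in M. M_op \<Theta> (Minv M \<Theta> G) t \<omega> = G t \<omega>"
proof -
  have GC: "G_class M \<Theta> G" using G0 by (simp add: G_class0_def)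
  have Gz: "\<And>t. (\<exists>l. t$l = 0) \<Longrightarrow> AE \<omega> in M. G t \<omega> = 0" using G0 by (simp add: G_class0_def)
  define W where "W = Minv M \<Theta> G"
  have IL: "iter_lim M coords (box_sum \<Theta> G t) 0 (W t)" for t unfolding W_def by (rule G_iter[OF GC])
  have si: "stationary_increments M G" using GC by (simp add: G_class_def)
  have Gm: "G t \<in> borel_measurable M" for t using si by (simp add: stationary_increments_def random_field_def)
  have dW: "AE \<omega> in M. delta W j \<omega> = mat_exp (tstar j \<Theta>) *v delta G j \<omega>" for j
  proof -
    define V where "V \<omega> = mat_exp (tstar j \<Theta>) *v delta G j \<omega>" for \<omega>
    have Vm: "V \<in> borel_measurable M" unfolding V_def by (intro mv_meas delta_meas Gm)
    have fin: "finite (Pow (UNIV::'N set))" by simp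
    have each: "\<forall>S\<in>Pow UNIV. iter_lim M coords (\<lambda>a \<omega>. (-1)^card S *\<^sub>R box_sum \<Theta> G (j - ind_vec S) a \<omega>) 0
        (\<lambda>\<omega>. (-1)^card S *\<^sub>R W (j - ind_vec S) \<omega>)"
      using iter_lim_bl[OF bounded_linear_scaleR_right IL] by blast
    have X: "iter_lim M coords (\<lambda>a \<omega>. \<Sum>S\<in>Pow UNIV. (-1)^card S *\<^sub>R box_sum \<Theta> G (j - ind_vec S) a \<omega>) 0
        (\<lambda>\<omega>. \<Sum>S\<in>Pow UNIV. (-1)^card S *\<^sub>R W (j - ind_vec S) \<omega>)"
      by (rule iter_lim_sum[OF fin each])
    have e1: "(\<lambda>a \<omega>. \<Sum>S\<in>Pow UNIV. (-1)^card S *\<^sub>R box_sum \<Theta> G (j - ind_vec S) a \<omega>)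
        = (\<lambda>a \<omega>. of_bool (\<forall>l. a$l \<le> j$l) *\<^sub>R V \<omega>)"
    proof (intro ext)
      fix a \<omega>
      show "(\<Sum>S\<in>Pow UNIV. (-1)^card S *\<^sub>R box_sum \<Theta> G (j - ind_vec S) a \<omega>) = of_bool (\<forall>l. a$l \<le> j$l) *\<^sub>R V \<omega>"
        unfolding box_sum_boxs V_def by (rule delta_boxsum)
    qed
    have e2: "(\<lambda>\<omega>. \<Sum>S\<in>Pow UNIV. (-1)^card S *\<^sub>R W (j - ind_vec S) \<omega>) = delta W j"
      by (simp add: fun_eq_iff delta_def)
    have "iter_lim M coords (\<lambda>a \<omega>. of_bool (\<forall>l. a$l \<le> j$l) *\<^sub>R V \<omega>) 0 (delta W j)"
      using X unfolding e1 e2 .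
    from iter_lim_ind[OF Vm this] show ?thesis by (simp add: set_coords V_def)
  qed
  have fM: "finite (M_range t)" by (simp add: M_range_boxs finite_boxs)
  have A1: "AE \<omega> in M. \<forall>j\<in>M_range t. delta W j \<omega> = mat_exp (tstar j \<Theta>) *v delta G j \<omega>"
    by (rule AE_finite_allI[OF fM]) (rule dW)
  have A2: "AE \<omega> in M. \<forall>S\<in>Pow UNIV. S \<noteq> {l. t$l < 0} \<longrightarrow> G (corner (mlo t) (mhi t) S) \<omega> = 0"
  proof (rule AE_finite_allI)
    show "finite (Pow (UNIV::'N set))" by simp
    fix S :: "'N set"
    show "AE \<omega> in M. S \<noteq> {l. t$l < 0} \<longrightarrow> G (corner (mlo t) (mhi t) S) \<omega> = 0"
    proof (cases "S = {l. t$l < 0}")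
      case True then show ?thesis by simp
    next
      case False
      from Gz[OF corner_zero[OF False]] show ?thesis by eventually_elim simp
    qed
  qed
  have "AE \<omega> in M. M_op \<Theta> W t \<omega> = G t \<omega>"
    using A1 A2
  proof eventually_elim
    case (elim \<omega>)
    define N where "N = {l. t$l < 0}"
    have s2: "((-1::real)^card N) * (-1)^card N = 1"
      by (simp flip: power_mult_distrib)
    have "(\<Sum>j\<in>M_range t. mat_exp (- tstar j \<Theta>) *v delta W j \<omega>) = (\<Sum>j\<in>M_range t. delta G j \<omega>)"
    proof (rule sum.cong[OF refl])
      fix j assume "j \<in> M_range t"
      then show "mat_exp (- tstar j \<Theta>) *v delta W j \<omega> = delta G j \<omega>" using elim(1) by (simp add: mat_exp_cancel2)
    qed
    also have "\<dots> = (\<Sum>S\<in>Pow UNIV. (-1)^card S *\<^sub>R G (corner (mlo t) (mhi t) S) \<omega>)"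
      unfolding M_range_boxs by (rule box_telescope[OF mlo_mhi])
    also have "\<dots> = (-1)^card N *\<^sub>R G (corner (mlo t) (mhi t) N) \<omega>
        + (\<Sum>S\<in>Pow UNIV - {N}. (-1)^card S *\<^sub>R G (corner (mlo t) (mhi t) S) \<omega>)"
      by (rule sum.remove) simp_all
    also have "(\<Sum>S\<in>Pow UNIV - {N}. (-1)^card S *\<^sub>R G (corner (mlo t) (mhi t) S) \<omega>) = 0"
      by (rule sum.neutral) (use elim(2) in \<open>auto simp: N_def\<close>)
    also have "corner (mlo t) (mhi t) N = t" unfolding N_def by (rule corner_neg)
    finally have "(\<Sum>j\<in>M_range t. mat_exp (- tstar j \<Theta>) *v delta W j \<omega>) = (-1)^card N *\<^sub>R G t \<omega>" by simp
    then show ?case by (simp add: M_op_def N_def[symmetric] s2)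
  qed
  then show ?thesis by (simp add: W_def)
qed

end

theorem mainTheorem8:
  fixes M :: "'w measure"
    and \<Theta> :: "'N::{finite,linorder} \<Rightarrow> real^'n^'n"
  assumes "prob_space M"
    and "\<forall>i j. \<Theta> i ** \<Theta> j = \<Theta> j ** \<Theta> i"
    and "\<forall>l. transpose (\<Theta> l) = \<Theta> l"
    and "\<forall>l. pos_def_mat (\<Theta> l)"
  shows "(\<forall>Y. self_similar M \<Theta> Y \<longrightarrow> G_class0 M \<Theta> (M_op \<Theta> Y))
       \<and> (\<forall>G. G_class M \<Theta> G \<longrightarrow> self_similar M \<Theta> (Minv M \<Theta> G))
       \<and> (\<forall>Y. self_similar M \<Theta> Y \<longrightarrow>
             (\<forall>t. AE \<omega> in M. Minv M \<Theta> (M_op \<Theta> Y) t \<omega> = Y t \<omega>))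
       \<and> (\<forall>G. G_class0 M \<Theta> G \<longrightarrow>
             (\<forall>t. AE \<omega> in M. M_op \<Theta> (Minv M \<Theta> G) t \<omega> = G t \<omega>))"
proof -
  interpret prob_space M by (rule assms(1))
  have comm: "\<forall>i j. \<Theta> i ** \<Theta> j = \<Theta> j ** \<Theta> i" by (rule assms(2))
  have pd: "\<forall>l. pos_def_mat (\<Theta> l)" by (rule assms(4))
  have P1: "\<forall>Y. self_similar M \<Theta> Y \<longrightarrow> G_class0 M \<Theta> (M_op \<Theta> Y)"
  proof (intro allI impI)
    fix Y :: "(int,'N) vec \<Rightarrow> 'w \<Rightarrow> real^'n"
    assume ss: "self_similar M \<Theta> Y"
    have "\<forall>t. \<exists>X. series_lim M \<Theta> (M_op \<Theta> Y) t X" using series_Mop[OF ss pd] by blast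
    moreover have "\<forall>t. (\<exists>l. t$l = 0) \<longrightarrow> (AE \<omega> in M. M_op \<Theta> Y t \<omega> = 0)"
      by (auto intro!: AE_I2 Mop_zero)
    ultimately show "G_class0 M \<Theta> (M_op \<Theta> Y)"
      by (simp add: G_class0_def G_class_def Mop_stationary[OF comm ss])
  qed
  have P2: "\<forall>G. G_class M \<Theta> G \<longrightarrow> self_similar M \<Theta> (Minv M \<Theta> G)"
    using Minv_ss[OF comm] by blast
  have P3: "\<forall>Y. self_similar M \<Theta> Y \<longrightarrow> (\<forall>t. AE \<omega> in M. Minv M \<Theta> (M_op \<Theta> Y) t \<omega> = Y t \<omega>)"
  proof (intro allI impI)
    fix Y :: "(int,'N) vec \<Rightarrow> 'w \<Rightarrow> real^'n" and t
    assume ss: "self_similar M \<Theta> Y"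
    have sl: "series_lim M \<Theta> (M_op \<Theta> Y) t (Y t)" by (rule series_Mop[OF ss pd])
    have "series_lim M \<Theta> (M_op \<Theta> Y) t (Minv M \<Theta> (M_op \<Theta> Y) t)"
      unfolding Minv_def by (rule someI[where P="series_lim M \<Theta> (M_op \<Theta> Y) t", OF sl])
    with sl show "AE \<omega> in M. Minv M \<Theta> (M_op \<Theta> Y) t \<omega> = Y t \<omega>"
      unfolding series_lim_def by (intro iter_lim_unique)
  qed
  have P4: "\<forall>G. G_class0 M \<Theta> G \<longrightarrow> (\<forall>t. AE \<omega> in M. M_op \<Theta> (Minv M \<Theta> G) t \<omega> = G t \<omega>)"
    using Mop_Minv by blast
  show ?thesis using P1 P2 P3 P4 by blast
qed


end
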